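(* Let $\mathfrak g$ be a nonsemisimple complex Lie algebra, $\mathfrak p$ a nonperfect ideal of $\mathfrak g$, and $\phi:\mathfrak p\to\mathbb C$ a Lie algebra homomorphism. Choose a totally ordered basis $\{y_j\}_{j\in J}$ of a complement of $\mathfrak p$ in $\mathfrak g^{\phi}$ and let $\mathbb C[y]\subseteq\mathcal U(\mathfrak g)$ be the span of the ordered monomials $y^\beta=y_{j_1}^{\beta_{j_1}}\cdots y_{j_n}^{\beta_{j_n}}$ ($j_1<\dots<j_n$, $\beta\in\mathbb Z_+^J$ finitely supported), with $\mathbb C[y]=\mathbb C$ if $J=\emptyset$. Then the space of quasi-Whittaker vectors of type $\phi$ in the universal quasi-Whittaker module satisfies $$W(\phi)_{\phi}=\mathbb C[y]\,w_{\phi}.$$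
   Context: All vector spaces and Lie algebras are over $\mathbb C$. A Lie algebra homomorphism $\phi:\mathfrak p\to\mathbb C$ is a linear map vanishing on $[\mathfrak p,\mathfrak p]$. For a $\mathfrak g$-module $V$, a vector $v\in V$ is a quasi-Whittaker vector of type $\phi$ if $pv=\phi(p)v$ for all $p\in\mathfrak p$; $V_\phi=\{v\in V: pv=\phi(p)v\ \forall p\in\mathfrak p\}$. Let $\mathbb C w_\phi$ be the one-dimensional $\mathfrak p$-module with $pw_\phi=\phi(p)w_\phi$, and $W(\phi)=\mathcal U(\mathfrak g)\otimes_{\mathcal U(\mathfrak p)}\mathbb C w_\phi$ (the universal quasi-Whittaker module of type $\phi$); $w_\phi$ denotes $1\otimes w_\phi$. The Whittaker annihilator of $\phi$ is $\mathfrak g^{\phi}=\{g\in\mathfrak g:\phi([g,p])=0\ \forall p\in\mathfrak p\}$; it is a subalgebra of $\mathfrak g$ containing $\mathfrak p$. *)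

theory Defs
  imports Complex_Main
begin

definition lie_algebra :: "(complex \<Rightarrow> 'g::ab_group_add \<Rightarrow> 'g) \<Rightarrow> ('g \<Rightarrow> 'g \<Rightarrow> 'g) \<Rightarrow> bool" where
  "lie_algebra smul br \<longleftrightarrow>
     vector_space smul \<and>
     (\<forall>x y z. br (x + y) z = br x z + br y z) \<and>
     (\<forall>x y z. br x (y + z) = br x y + br x z) \<and>
     (\<forall>c x y. br (smul c x) y = smul c (br x y)) \<and>
     (\<forall>c x y. br x (smul c y) = smul c (br x y)) \<and>
     (\<forall>x. br x x = 0) \<and>
     (\<forall>x y z. br x (br y z) + br y (br z x) + br z (br x y) = 0)"

definition bracket_span :: "(complex \<Rightarrow> 'g::ab_group_add \<Rightarrow> 'g) \<Rightarrow> ('g \<Rightarrow> 'g \<Rightarrow> 'g) \<Rightarrow> 'g set \<Rightarrow> 'g set \<Rightarrow> 'g set" where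
  "bracket_span smul br A B = module.span smul {br a b | a b. a \<in> A \<and> b \<in> B}"

definition lie_ideal :: "(complex \<Rightarrow> 'g::ab_group_add \<Rightarrow> 'g) \<Rightarrow> ('g \<Rightarrow> 'g \<Rightarrow> 'g) \<Rightarrow> 'g set \<Rightarrow> bool" where
  "lie_ideal smul br I \<longleftrightarrow> module.subspace smul I \<and> (\<forall>x p. p \<in> I \<longrightarrow> br x p \<in> I)"

fun derived_series :: "(complex \<Rightarrow> 'g::ab_group_add \<Rightarrow> 'g) \<Rightarrow> ('g \<Rightarrow> 'g \<Rightarrow> 'g) \<Rightarrow> 'g set \<Rightarrow> nat \<Rightarrow> 'g set" where
  "derived_series smul br I 0 = I"
| "derived_series smul br I (Suc k) =
     bracket_span smul br (derived_series smul br I k) (derived_series smul br I k)"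

definition solvable_ideal :: "(complex \<Rightarrow> 'g::ab_group_add \<Rightarrow> 'g) \<Rightarrow> ('g \<Rightarrow> 'g \<Rightarrow> 'g) \<Rightarrow> 'g set \<Rightarrow> bool" where
  "solvable_ideal smul br I \<longleftrightarrow> (\<exists>k. derived_series smul br I k = {0})"

definition semisimple :: "(complex \<Rightarrow> 'g::ab_group_add \<Rightarrow> 'g) \<Rightarrow> ('g \<Rightarrow> 'g \<Rightarrow> 'g) \<Rightarrow> bool" where
  "semisimple smul br \<longleftrightarrow>
     (\<exists>B. finite B \<and> module.span smul B = UNIV) \<and>
     (\<forall>I. lie_ideal smul br I \<and> solvable_ideal smul br I \<longrightarrow> I = {0})"

definition perfect :: "(complex \<Rightarrow> 'g::ab_group_add \<Rightarrow> 'g) \<Rightarrow> ('g \<Rightarrow> 'g \<Rightarrow> 'g) \<Rightarrow> 'g set \<Rightarrow> bool" where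
  "perfect smul br P \<longleftrightarrow> bracket_span smul br P P = P"

text \<open>Lie algebra homomorphism P \<rightarrow> C: linear on P and vanishing on brackets of P
(hence on [P,P]). Values of phi outside P are irrelevant.\<close>
definition lie_hom_to_C :: "(complex \<Rightarrow> 'g::ab_group_add \<Rightarrow> 'g) \<Rightarrow> ('g \<Rightarrow> 'g \<Rightarrow> 'g) \<Rightarrow> 'g set \<Rightarrow> ('g \<Rightarrow> complex) \<Rightarrow> bool" where
  "lie_hom_to_C smul br P phi \<longleftrightarrow>
     (\<forall>a\<in>P. \<forall>b\<in>P. phi (a + b) = phi a + phi b) \<and>
     (\<forall>c. \<forall>a\<in>P. phi (smul c a) = c * phi a) \<and>
     (\<forall>a\<in>P. \<forall>b\<in>P. phi (br a b) = 0)"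

definition whittaker_annihilator :: "('g \<Rightarrow> 'g \<Rightarrow> 'g) \<Rightarrow> 'g set \<Rightarrow> ('g \<Rightarrow> complex) \<Rightarrow> 'g set" where
  "whittaker_annihilator br P phi = {g. \<forall>p\<in>P. phi (br g p) = 0}"

text \<open>Elements: finitely supported functions from words ('g list) to C; the word u
corresponds to the noncommutative monomial u_1 u_2 ... u_n.\<close>

definition fin_supp :: "('g list \<Rightarrow> complex) \<Rightarrow> bool" where
  "fin_supp f \<longleftrightarrow> finite {w. f w \<noteq> 0}"

definition fmul :: "('g list \<Rightarrow> complex) \<Rightarrow> ('g list \<Rightarrow> complex) \<Rightarrow> ('g list \<Rightarrow> complex)" where
  "fmul f h = (\<lambda>w. \<Sum>k\<le>length w. f (take k w) * h (drop k w))"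

definition fword :: "'g list \<Rightarrow> ('g list \<Rightarrow> complex)" where
  "fword u = (\<lambda>w. if w = u then 1 else 0)"

definition fone :: "'g list \<Rightarrow> complex" where
  "fone = fword []"

definition fgen :: "'g \<Rightarrow> ('g list \<Rightarrow> complex)" where
  "fgen a = fword [a]"

text \<open>Defining relations of U(g) as a quotient of the free algebra on the set g:
linearity of the embedding and x y - y x = [x,y].\<close>
definition U_relations :: "(complex \<Rightarrow> 'g::ab_group_add \<Rightarrow> 'g) \<Rightarrow> ('g \<Rightarrow> 'g \<Rightarrow> 'g) \<Rightarrow> ('g list \<Rightarrow> complex) set" where
  "U_relations smul br =
     {(\<lambda>w. fgen (a + b) w - fgen a w - fgen b w) | a b. True} \<union>
     {(\<lambda>w. fgen (smul c a) w - c * fgen a w) | c a. True} \<union>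
     {(\<lambda>w. fmul (fgen a) (fgen b) w - fmul (fgen b) (fgen a) w - fgen (br a b) w) | a b. True}"

text \<open>Two-sided ideal of the free algebra generated by the relations; U(g) = F / U_ideal.\<close>
inductive_set U_ideal :: "(complex \<Rightarrow> 'g::ab_group_add \<Rightarrow> 'g) \<Rightarrow> ('g \<Rightarrow> 'g \<Rightarrow> 'g) \<Rightarrow> ('g list \<Rightarrow> complex) set"
  for smul br where
  gen: "r \<in> U_relations smul br \<Longrightarrow> r \<in> U_ideal smul br"
| zero: "(\<lambda>w. 0) \<in> U_ideal smul br"
| add: "x \<in> U_ideal smul br \<Longrightarrow> y \<in> U_ideal smul br \<Longrightarrow> (\<lambda>w. x w + y w) \<in> U_ideal smul br"
| scale: "x \<in> U_ideal smul br \<Longrightarrow> (\<lambda>w. c * x w) \<in> U_ideal smul br"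
| lmul: "x \<in> U_ideal smul br \<Longrightarrow> fin_supp f \<Longrightarrow> fmul f x \<in> U_ideal smul br"
| rmul: "x \<in> U_ideal smul br \<Longrightarrow> fin_supp f \<Longrightarrow> fmul x f \<in> U_ideal smul br"

text \<open>W(phi) = U(g) \<otimes>_U(p) C w_phi = U(g) / U(g){p - phi(p) : p \<in> P} = F / W_ideal,
where W_ideal is the left ideal of F generated by U_ideal and the elements p - phi(p).
The vector w_phi is the class of fone, and the class of f is f . w_phi.\<close>
inductive_set W_ideal :: "(complex \<Rightarrow> 'g::ab_group_add \<Rightarrow> 'g) \<Rightarrow> ('g \<Rightarrow> 'g \<Rightarrow> 'g) \<Rightarrow> 'g set \<Rightarrow> ('g \<Rightarrow> complex) \<Rightarrow> ('g list \<Rightarrow> complex) set"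
  for smul br P phi where
  uid: "x \<in> U_ideal smul br \<Longrightarrow> x \<in> W_ideal smul br P phi"
| gen: "p \<in> P \<Longrightarrow> (\<lambda>w. fgen p w - phi p * fone w) \<in> W_ideal smul br P phi"
| zero: "(\<lambda>w. 0) \<in> W_ideal smul br P phi"
| add: "x \<in> W_ideal smul br P phi \<Longrightarrow> y \<in> W_ideal smul br P phi \<Longrightarrow> (\<lambda>w. x w + y w) \<in> W_ideal smul br P phi"
| scale: "x \<in> W_ideal smul br P phi \<Longrightarrow> (\<lambda>w. c * x w) \<in> W_ideal smul br P phi"
| lmul: "x \<in> W_ideal smul br P phi \<Longrightarrow> fin_supp f \<Longrightarrow> fmul f x \<in> W_ideal smul br P phi"

text \<open>The class of f in W(phi) (represented by f, fin_supp f) is a quasi-Whittaker vector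
of type phi iff p.[f] = phi(p)[f] in W(phi) for all p \<in> P.\<close>
definition quasi_whittaker_rep :: "(complex \<Rightarrow> 'g::ab_group_add \<Rightarrow> 'g) \<Rightarrow> ('g \<Rightarrow> 'g \<Rightarrow> 'g) \<Rightarrow> 'g set \<Rightarrow> ('g \<Rightarrow> complex) \<Rightarrow> ('g list \<Rightarrow> complex) \<Rightarrow> bool" where
  "quasi_whittaker_rep smul br P phi f \<longleftrightarrow>
     (\<forall>p\<in>P. (\<lambda>w. fmul (fgen p) f w - phi p * f w) \<in> W_ideal smul br P phi)"

text \<open>C[y] \<subseteq> U(g) (at the level of the free algebra): span of the ordered monomials
y_{j_1} y_{j_2} ... y_{j_n} with j_1 \<le> ... \<le> j_n in J (the empty product is 1).\<close>
definition ordered_monomial_span :: "('j::linorder \<Rightarrow> 'g) \<Rightarrow> 'j set \<Rightarrow> ('g list \<Rightarrow> complex) set" where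
  "ordered_monomial_span y J =
     {f. \<exists>S c. finite S \<and> (\<forall>js\<in>S. sorted js \<and> set js \<subseteq> J) \<and>
             f = (\<lambda>w. \<Sum>js\<in>S. c js * fword (map y js) w)}"

end

theory Submission
  imports Defs
begin


section \<open>Free algebra basics\<close>

lemma fmul_fword_left:
  "fmul (fword u) f = (\<lambda>w. if length u \<le> length w \<and> take (length u) w = u then f (drop (length u) w) else 0)"
proof (rule ext)
  fix w :: "'a list"
  have "fmul (fword u) f w = (\<Sum>k\<le>length w. (if k = length u \<and> take (length u) w = u then f (drop (length u) w) else 0))"
    unfolding fmul_def fword_def
    by (rule sum.cong) auto
  also have "\<dots> = (if length u \<le> length w \<and> take (length u) w = u then f (drop (length u) w) else 0)"
    by (simp add: sum.If_cases) (auto simp: Int_def)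
  finally show "fmul (fword u) f w = (if length u \<le> length w \<and> take (length u) w = u then f (drop (length u) w) else 0)" .
qed

lemma fword_mult: "fmul (fword u) (fword v) = fword (u @ v)"
  unfolding fmul_fword_left
  by (rule ext) (auto simp: fword_def, metis append_take_drop_id)

lemma fmul_add_left: "fmul (\<lambda>w. f w + g w) h = (\<lambda>w. fmul f h w + fmul g h w)"
  unfolding fmul_def by (simp add: distrib_right sum.distrib)
lemma fmul_diff_left: "fmul (\<lambda>w. f w - g w) h = (\<lambda>w. fmul f h w - fmul g h w)"
  unfolding fmul_def by (simp add: left_diff_distrib sum_subtractf)
lemma fmul_scale_left: "fmul (\<lambda>w. c * f w) h = (\<lambda>w. c * fmul f h w)"
  unfolding fmul_def by (simp add: sum_distrib_left mult.assoc)
lemma fmul_add_right: "fmul h (\<lambda>w. f w + g w) = (\<lambda>w. fmul h f w + fmul h g w)"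
  unfolding fmul_def by (simp add: distrib_left sum.distrib)
lemma fmul_diff_right: "fmul h (\<lambda>w. f w - g w) = (\<lambda>w. fmul h f w - fmul h g w)"
  unfolding fmul_def by (simp add: right_diff_distrib sum_subtractf)
lemma fmul_scale_right: "fmul h (\<lambda>w. c * f w) = (\<lambda>w. c * fmul h f w)"
  unfolding fmul_def by (simp add: sum_distrib_left mult.left_commute)
lemma fmul_zero_right: "fmul h (\<lambda>w. 0) = (\<lambda>w. 0)"
  unfolding fmul_def by simp
lemma fmul_sum_right: "fmul h (\<lambda>w. \<Sum>i\<in>I. f i w) = (\<lambda>w. \<Sum>i\<in>I. fmul h (f i) w)"
  unfolding fmul_def by (simp add: sum_distrib_left sum.swap[of _ I])

lemma fin_supp_fword[simp]: "fin_supp (fword u)"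
  unfolding fin_supp_def fword_def by simp
lemma fin_supp_fgen[simp]: "fin_supp (fgen a)"
  unfolding fgen_def by simp
lemma fin_supp_add: "fin_supp f \<Longrightarrow> fin_supp g \<Longrightarrow> fin_supp (\<lambda>w. f w + g w)"
  unfolding fin_supp_def by (rule finite_subset[of _ "{w. f w \<noteq> 0} \<union> {w. g w \<noteq> 0}"]) auto
lemma fin_supp_diff: "fin_supp f \<Longrightarrow> fin_supp g \<Longrightarrow> fin_supp (\<lambda>w. f w - g w)"
  unfolding fin_supp_def by (rule finite_subset[of _ "{w. f w \<noteq> 0} \<union> {w. g w \<noteq> 0}"]) auto
lemma fin_supp_scale: "fin_supp f \<Longrightarrow> fin_supp (\<lambda>w. c * f w)"
  unfolding fin_supp_def by (rule finite_subset[of _ "{w. f w \<noteq> 0}"]) auto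
lemma fin_supp_zero[simp]: "fin_supp (\<lambda>w. 0)"
  unfolding fin_supp_def by simp
lemma fin_supp_sum: "finite I \<Longrightarrow> (\<And>i. i \<in> I \<Longrightarrow> fin_supp (f i)) \<Longrightarrow> fin_supp (\<lambda>w. \<Sum>i\<in>I. f i w)"
  by (induction I rule: finite_induct) (auto intro: fin_supp_add)

definition fspan :: "'g list set \<Rightarrow> ('g list \<Rightarrow> complex) set" where
  "fspan S = {f. fin_supp f \<and> (\<forall>w. f w \<noteq> 0 \<longrightarrow> w \<in> S)}"

lemma fin_supp_expand:
  assumes "fin_supp f"
  shows "f = (\<lambda>w. \<Sum>v\<in>{v. f v \<noteq> 0}. f v * fword v w)"
proof (rule ext)
  fix w
  have "(\<Sum>v\<in>{v. f v \<noteq> 0}. f v * fword v w) = (\<Sum>v\<in>{v. f v \<noteq> 0}. if v = w then f v else 0)"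
    by (rule sum.cong) (auto simp: fword_def)
  also have "\<dots> = f w" using assms by (simp add: fin_supp_def sum.delta)
  finally show "f w = (\<Sum>v\<in>{v. f v \<noteq> 0}. f v * fword v w)" by simp
qed

lemma fspan_induct[consumes 1, case_names zero add scale word]:
  assumes f: "f \<in> fspan S"
    and z: "Q (\<lambda>w. 0)"
    and a: "\<And>f g. Q f \<Longrightarrow> Q g \<Longrightarrow> Q (\<lambda>w. f w + g w)"
    and s: "\<And>f c. Q f \<Longrightarrow> Q (\<lambda>w. c * f w)"
    and b: "\<And>u. u \<in> S \<Longrightarrow> Q (fword u)"
  shows "Q f"
proof -
  have fs: "finite {v. f v \<noteq> 0}" and sub: "{v. f v \<noteq> 0} \<subseteq> S"
    using f by (auto simp: fspan_def fin_supp_def)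
  have "\<forall>A. A \<subseteq> {v. f v \<noteq> 0} \<longrightarrow> Q (\<lambda>w. \<Sum>v\<in>A. f v * fword v w)"
  proof (intro allI impI)
    fix A assume A: "A \<subseteq> {v. f v \<noteq> 0}"
    then have "finite A" using fs finite_subset by blast
    then show "Q (\<lambda>w. \<Sum>v\<in>A. f v * fword v w)" using A
    proof (induction A rule: finite_induct)
      case empty then show ?case using z by simp
    next
      case (insert x F)
      have "Q (\<lambda>w. f x * fword x w)" using s b insert sub by blast
      moreover have "Q (\<lambda>w. \<Sum>v\<in>F. f v * fword v w)" using insert by blast
      ultimately have "Q (\<lambda>w. f x * fword x w + (\<Sum>v\<in>F. f v * fword v w))" using a by blast
      then show ?case using insert by simp
    qed
  qed
  then have "Q (\<lambda>w. \<Sum>v\<in>{v. f v \<noteq> 0}. f v * fword v w)" by blast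
  then show ?thesis using fin_supp_expand[of f] f by (simp add: fspan_def)
qed

lemma fspan_zero: "(\<lambda>w. 0) \<in> fspan S" by (simp add: fspan_def)
lemma fspan_add: "f \<in> fspan S \<Longrightarrow> g \<in> fspan S \<Longrightarrow> (\<lambda>w. f w + g w) \<in> fspan S"
  by (auto simp: fspan_def intro: fin_supp_add) (metis add_0)
lemma fspan_diff: "f \<in> fspan S \<Longrightarrow> g \<in> fspan S \<Longrightarrow> (\<lambda>w. f w - g w) \<in> fspan S"
  by (auto simp: fspan_def intro: fin_supp_diff) metis
lemma fspan_scale: "f \<in> fspan S \<Longrightarrow> (\<lambda>w. c * f w) \<in> fspan S"
  by (auto simp: fspan_def intro: fin_supp_scale)
lemma fspan_word: "u \<in> S \<Longrightarrow> fword u \<in> fspan S"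
  using fin_supp_fword[of u] by (auto simp: fspan_def fword_def)
lemma fspan_mono: "f \<in> fspan S \<Longrightarrow> S \<subseteq> T \<Longrightarrow> f \<in> fspan T"
  by (auto simp: fspan_def)
lemma fspan_sum: "finite I \<Longrightarrow> (\<And>i. i \<in> I \<Longrightarrow> f i \<in> fspan S) \<Longrightarrow> (\<lambda>w. \<Sum>i\<in>I. f i w) \<in> fspan S"
  by (induction I rule: finite_induct) (auto intro: fspan_add fspan_zero)

lemma fspan_lmul:
  assumes "f \<in> fspan S" "\<And>v. v \<in> S \<Longrightarrow> u @ v \<in> T"
  shows "fmul (fword u) f \<in> fspan T"
  using assms(1)
proof (induction rule: fspan_induct)
  case zero show ?case by (simp add: fmul_zero_right fspan_zero)
next
  case (add f g) then show ?case by (simp add: fmul_add_right fspan_add)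
next
  case (scale f c) then show ?case by (simp add: fmul_scale_right fspan_scale)
next
  case (word v) then show ?case by (simp add: fword_mult fspan_word assms(2))
qed



locale WH =
  fixes smul :: "complex \<Rightarrow> 'g::ab_group_add \<Rightarrow> 'g"
    and br :: "'g \<Rightarrow> 'g \<Rightarrow> 'g"
    and P :: "'g set"
    and phi :: "'g \<Rightarrow> complex"
  assumes lie: "lie_algebra smul br"
    and ideal: "lie_ideal smul br P"
    and hom: "lie_hom_to_C smul br P phi"
begin

sublocale V: vector_space smul
  using lie unfolding lie_algebra_def by blast

lemma br_add_l: "br (x + y) z = br x z + br y z" using lie unfolding lie_algebra_def by blast
lemma br_add_r: "br x (y + z) = br x y + br x z" using lie unfolding lie_algebra_def by blast
lemma br_smul_l: "br (smul c x) y = smul c (br x y)" using lie unfolding lie_algebra_def by blast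
lemma br_smul_r: "br x (smul c y) = smul c (br x y)" using lie unfolding lie_algebra_def by blast
lemma br_self: "br x x = 0" using lie unfolding lie_algebra_def by blast
lemma jacobi: "br x (br y z) + br y (br z x) + br z (br x y) = 0" using lie unfolding lie_algebra_def by blast

lemma br_zero_l[simp]: "br 0 x = 0"
  using br_add_l[of 0 0 x] by simp
lemma br_zero_r[simp]: "br x 0 = 0"
  using br_add_r[of x 0 0] by simp
lemma br_neg_l: "br (- x) y = - br x y"
  using br_add_l[of x "-x" y] by (simp add: eq_neg_iff_add_eq_0 add.commute)
lemma br_neg_r: "br x (- y) = - br x y"
  using br_add_r[of x y "-y"] by (simp add: eq_neg_iff_add_eq_0 add.commute)
lemma br_diff_l: "br (x - y) z = br x z - br y z"
  using br_add_l[of x "-y" z] br_neg_l by simp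
lemma br_diff_r: "br x (y - z) = br x y - br x z"
  using br_add_r[of x y "-z"] br_neg_r by simp
lemma br_anti: "br x y = - br y x"
proof -
  have "br (x + y) (x + y) = br x x + br y x + (br x y + br y y)" by (simp add: br_add_l br_add_r)
  then have "br x y + br y x = 0" by (simp add: br_self add.commute)
  then show ?thesis by (simp add: eq_neg_iff_add_eq_0)
qed
lemma br_sum_l: "br (\<Sum>i\<in>I. f i) z = (\<Sum>i\<in>I. br (f i) z)"
  by (induction I rule: infinite_finite_induct) (auto simp: br_add_l)
lemma br_sum_r: "br z (\<Sum>i\<in>I. f i) = (\<Sum>i\<in>I. br z (f i))"
  by (induction I rule: infinite_finite_induct) (auto simp: br_add_r)

lemma P_sub: "V.subspace P" using ideal unfolding lie_ideal_def by blast
lemma P_0: "0 \<in> P" using P_sub V.subspace_0 by blast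
lemma P_add: "a \<in> P \<Longrightarrow> b \<in> P \<Longrightarrow> a + b \<in> P" using P_sub V.subspace_add by blast
lemma P_smul: "a \<in> P \<Longrightarrow> smul c a \<in> P" using P_sub V.subspace_scale by blast
lemma P_neg: "a \<in> P \<Longrightarrow> - a \<in> P" using P_sub V.subspace_neg by blast
lemma P_diff: "a \<in> P \<Longrightarrow> b \<in> P \<Longrightarrow> a - b \<in> P" using P_sub V.subspace_diff by blast
lemma P_sum: "(\<And>i. i \<in> I \<Longrightarrow> f i \<in> P) \<Longrightarrow> (\<Sum>i\<in>I. f i) \<in> P" using P_sub V.subspace_sum by blast
lemma P_br_r: "p \<in> P \<Longrightarrow> br x p \<in> P" using ideal unfolding lie_ideal_def by blast
lemma P_br_l: "p \<in> P \<Longrightarrow> br p x \<in> P" using P_br_r[of p x] br_anti[of p x] P_neg by fastforce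

lemma phi_add: "a \<in> P \<Longrightarrow> b \<in> P \<Longrightarrow> phi (a + b) = phi a + phi b" using hom unfolding lie_hom_to_C_def by blast
lemma phi_smul: "a \<in> P \<Longrightarrow> phi (smul c a) = c * phi a" using hom unfolding lie_hom_to_C_def by blast
lemma phi_br: "a \<in> P \<Longrightarrow> b \<in> P \<Longrightarrow> phi (br a b) = 0" using hom unfolding lie_hom_to_C_def by blast
lemma phi_0[simp]: "phi 0 = 0" using phi_smul[OF P_0, of 0] by simp
lemma phi_neg: "a \<in> P \<Longrightarrow> phi (- a) = - phi a" using phi_smul[of a "-1"] by simp
lemma phi_diff: "a \<in> P \<Longrightarrow> b \<in> P \<Longrightarrow> phi (a - b) = phi a - phi b"
  using phi_add[of a "-b"] phi_neg[of b] P_neg[of b] by simp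
lemma phi_sum: "(\<And>i. i \<in> I \<Longrightarrow> f i \<in> P) \<Longrightarrow> phi (\<Sum>i\<in>I. f i) = (\<Sum>i\<in>I. phi (f i))"
proof (induction I rule: infinite_finite_induct)
  case (insert x F)
  then show ?case using phi_add[of "f x" "sum f F"] P_sum[of F f] by auto
qed auto

section \<open>The left ideal W\<close>

abbreviation W where "W \<equiv> W_ideal smul br P phi"

lemma W_ext: assumes "x \<in> W" "\<And>w. x w = z w" shows "z \<in> W"
proof -
  have "x = z" by (rule ext) (rule assms(2))
  then show "z \<in> W" using assms(1) by simp
qed
lemma W_zero: "(\<lambda>w. 0) \<in> W" by (rule W_ideal.zero)
lemma W_add: "x \<in> W \<Longrightarrow> z \<in> W \<Longrightarrow> (\<lambda>w. x w + z w) \<in> W" by (rule W_ideal.add)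
lemma W_scale: "x \<in> W \<Longrightarrow> (\<lambda>w. c * x w) \<in> W" by (rule W_ideal.scale)
lemma W_lmul: "x \<in> W \<Longrightarrow> fin_supp h \<Longrightarrow> fmul h x \<in> W" by (rule W_ideal.lmul)
lemma W_diff: "x \<in> W \<Longrightarrow> z \<in> W \<Longrightarrow> (\<lambda>w. x w - z w) \<in> W"
proof -
  assume "x \<in> W" "z \<in> W"
  then have "(\<lambda>w. x w + (- 1) * z w) \<in> W" by (intro W_add W_scale)
  then show ?thesis by (rule W_ext) simp
qed
lemma W_sum: "(\<And>i. i \<in> I \<Longrightarrow> f i \<in> W) \<Longrightarrow> (\<lambda>w. \<Sum>i\<in>I. f i w) \<in> W"
proof (induction I rule: infinite_finite_induct)
  case (insert x F)
  then have "(\<lambda>w. f x w + (\<Sum>i\<in>F. f i w)) \<in> W" by (intro W_add) auto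
  then show ?case using insert by simp
qed (auto intro: W_zero)

definition eqv :: "('g list \<Rightarrow> complex) \<Rightarrow> ('g list \<Rightarrow> complex) \<Rightarrow> bool" where
  "eqv f g \<longleftrightarrow> (\<lambda>w. f w - g w) \<in> W"

lemma eqv_refl[simp]: "eqv f f"
  unfolding eqv_def by (rule W_ext[OF W_zero]) simp
lemma eqv_sym: "eqv f g \<Longrightarrow> eqv g f"
  unfolding eqv_def by (drule W_scale[where c="-1"]) (erule W_ext, simp)
lemma eqv_trans[trans]: "eqv f g \<Longrightarrow> eqv g h \<Longrightarrow> eqv f h"
  unfolding eqv_def by (drule (1) W_add) (erule W_ext, simp)
lemma eqv_add: "eqv f f' \<Longrightarrow> eqv g g' \<Longrightarrow> eqv (\<lambda>w. f w + g w) (\<lambda>w. f' w + g' w)"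
  unfolding eqv_def by (drule (1) W_add) (erule W_ext, simp)
lemma eqv_diff: "eqv f f' \<Longrightarrow> eqv g g' \<Longrightarrow> eqv (\<lambda>w. f w - g w) (\<lambda>w. f' w - g' w)"
  unfolding eqv_def by (drule (1) W_diff) (erule W_ext, simp)
lemma eqv_scale: "eqv f f' \<Longrightarrow> eqv (\<lambda>w. c * f w) (\<lambda>w. c * f' w)"
  unfolding eqv_def by (drule W_scale[where c=c]) (erule W_ext, simp add: algebra_simps)
lemma eqv_lmul: "fin_supp h \<Longrightarrow> eqv f f' \<Longrightarrow> eqv (fmul h f) (fmul h f')"
  unfolding eqv_def by (drule (1) W_lmul) (simp add: fmul_diff_right)
lemma eqv_sum: "(\<And>i. i \<in> I \<Longrightarrow> eqv (f i) (g i)) \<Longrightarrow> eqv (\<lambda>w. \<Sum>i\<in>I. f i w) (\<lambda>w. \<Sum>i\<in>I. g i w)"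
  unfolding eqv_def by (drule W_sum) (erule W_ext, simp add: sum_subtractf)
lemma eqv_W: "eqv f (\<lambda>w. 0) \<longleftrightarrow> f \<in> W"
  unfolding eqv_def by simp
lemma eqv_cong: "eqv f g \<Longrightarrow> (\<And>w. f w = f' w) \<Longrightarrow> (\<And>w. g w = g' w) \<Longrightarrow> eqv f' g'"
proof -
  assume "eqv f g" "\<And>w. f w = f' w" "\<And>w. g w = g' w"
  then have "f = f'" "g = g'" by (auto intro: ext)
  then show ?thesis using \<open>eqv f g\<close> by simp
qed

definition red :: "'g list set \<Rightarrow> ('g list \<Rightarrow> complex) \<Rightarrow> bool" where
  "red S f \<longleftrightarrow> (\<exists>h\<in>fspan S. eqv f h)"

lemma red_fspan: "f \<in> fspan S \<Longrightarrow> red S f"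
  unfolding red_def by (rule bexI[of _ f]) auto
lemma red_word: "u \<in> S \<Longrightarrow> red S (fword u)"
  by (intro red_fspan fspan_word)
lemma red_zero: "red S (\<lambda>w. 0)"
  by (intro red_fspan fspan_zero)
lemma red_add: "red S f \<Longrightarrow> red S g \<Longrightarrow> red S (\<lambda>w. f w + g w)"
  unfolding red_def by (blast intro: eqv_add fspan_add)
lemma red_diff: "red S f \<Longrightarrow> red S g \<Longrightarrow> red S (\<lambda>w. f w - g w)"
  unfolding red_def by (blast intro: eqv_diff fspan_diff)
lemma red_scale: "red S f \<Longrightarrow> red S (\<lambda>w. c * f w)"
  unfolding red_def by (blast intro: eqv_scale fspan_scale)
lemma red_eqv: "eqv f g \<Longrightarrow> red S g \<Longrightarrow> red S f"
  unfolding red_def by (blast intro: eqv_trans)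
lemma red_mono: "red S f \<Longrightarrow> S \<subseteq> T \<Longrightarrow> red T f"
  unfolding red_def by (blast intro: fspan_mono)
lemma red_sum: "(\<And>i. i \<in> I \<Longrightarrow> red S (f i)) \<Longrightarrow> red S (\<lambda>w. \<Sum>i\<in>I. f i w)"
proof (induction I rule: infinite_finite_induct)
  case (insert x F)
  then have "red S (\<lambda>w. f x w + (\<Sum>i\<in>F. f i w))" by (intro red_add) auto
  then show ?case using insert by simp
qed (auto intro: red_zero)
lemma red_cong: "red S f \<Longrightarrow> (\<And>w. f w = g w) \<Longrightarrow> red S g"
  using red_eqv[of g f S] eqv_cong[OF eqv_refl[of f]] by blast

lemma red_fspan_trans:
  assumes "h \<in> fspan S" "\<And>u. u \<in> S \<Longrightarrow> red T (fword u)"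
  shows "red T h"
  using assms(1)
proof (induction rule: fspan_induct)
  case zero then show ?case by (rule red_zero)
next
  case (add f g) then show ?case by (rule red_add)
next
  case (scale f c) then show ?case by (rule red_scale)
next
  case (word u) then show ?case by (rule assms(2))
qed

lemma red_trans:
  assumes "red S f" "\<And>u. u \<in> S \<Longrightarrow> red T (fword u)"
  shows "red T f"
  using assms red_fspan_trans red_eqv unfolding red_def[of S] by blast

lemma red_lmul:
  assumes "red S f" "\<And>v. v \<in> S \<Longrightarrow> u @ v \<in> T"
  shows "red T (fmul (fword u) f)"
proof -
  obtain h where h: "h \<in> fspan S" "eqv f h" using assms(1) unfolding red_def by blast
  have "eqv (fmul (fword u) f) (fmul (fword u) h)" using h by (intro eqv_lmul) auto
  moreover have "fmul (fword u) h \<in> fspan T" using h assms(2) by (intro fspan_lmul)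
  ultimately show ?thesis unfolding red_def by blast
qed

section \<open>Defining relations in context\<close>

lemma U_to_W: "r \<in> U_ideal smul br \<Longrightarrow> fmul (fword pre) (fmul r (fword suf)) \<in> W"
  by (intro W_ideal.uid U_ideal.lmul U_ideal.rmul) auto

lemma rel_add: "eqv (fword (pre @ (a + b) # suf)) (\<lambda>w. fword (pre @ a # suf) w + fword (pre @ b # suf) w)"
proof -
  have "(\<lambda>w. fgen (a + b) w - fgen a w - fgen b w) \<in> U_ideal smul br"
    by (intro U_ideal.gen) (auto simp: U_relations_def)
  from U_to_W[OF this, of pre suf] show ?thesis
    unfolding eqv_def
    by (simp add: fmul_diff_left fmul_diff_right fgen_def fword_mult) (erule W_ext, simp)
qed

lemma rel_smul: "eqv (fword (pre @ smul c a # suf)) (\<lambda>w. c * fword (pre @ a # suf) w)"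
proof -
  have "(\<lambda>w. fgen (smul c a) w - c * fgen a w) \<in> U_ideal smul br"
    by (intro U_ideal.gen) (auto simp: U_relations_def)
  from U_to_W[OF this, of pre suf] show ?thesis
    unfolding eqv_def
    by (simp add: fmul_diff_left fmul_diff_right fmul_scale_left fmul_scale_right fgen_def fword_mult)
qed

lemma rel_br: "eqv (fword (pre @ a # b # suf)) (\<lambda>w. fword (pre @ b # a # suf) w + fword (pre @ br a b # suf) w)"
proof -
  have "(\<lambda>w. fmul (fgen a) (fgen b) w - fmul (fgen b) (fgen a) w - fgen (br a b) w) \<in> U_ideal smul br"
    by (intro U_ideal.gen) (auto simp: U_relations_def)
  from U_to_W[OF this, of pre suf] show ?thesis
    unfolding eqv_def
    by (simp add: fmul_diff_left fmul_diff_right fgen_def fword_mult) (erule W_ext, simp)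
qed

lemma rel_P: "p \<in> P \<Longrightarrow> eqv (fword (pre @ [p])) (\<lambda>w. phi p * fword pre w)"
proof -
  assume "p \<in> P"
  then have "(\<lambda>w. fgen p w - phi p * fone w) \<in> W" by (rule W_ideal.gen)
  from W_lmul[OF this, of "fword pre"] show ?thesis
    unfolding eqv_def
    by (simp add: fmul_diff_right fmul_scale_right fgen_def fone_def fword_mult)
qed

lemma rel_zero: "eqv (fword (pre @ 0 # suf)) (\<lambda>w. 0)"
  using rel_smul[of pre 0 0 suf] by simp

lemma rel_lin:
  assumes "finite I"
  shows "eqv (fword (pre @ (\<Sum>i\<in>I. smul (c i) (z i)) # suf)) (\<lambda>w. \<Sum>i\<in>I. c i * fword (pre @ z i # suf) w)"
  using assms
proof (induction I rule: finite_induct)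
  case empty then show ?case using rel_zero by simp
next
  case (insert x F)
  have "eqv (fword (pre @ (smul (c x) (z x) + (\<Sum>i\<in>F. smul (c i) (z i))) # suf))
     (\<lambda>w. fword (pre @ smul (c x) (z x) # suf) w + fword (pre @ (\<Sum>i\<in>F. smul (c i) (z i)) # suf) w)"
    by (rule rel_add)
  also have "eqv \<dots> (\<lambda>w. c x * fword (pre @ z x # suf) w + (\<Sum>i\<in>F. c i * fword (pre @ z i # suf) w))"
    by (intro eqv_add rel_smul insert.IH)
  finally show ?case using insert by simp
qed

end


context WH begin

definition whv :: "'g list \<Rightarrow> bool" where
  "whv v \<longleftrightarrow> (\<forall>p\<in>P. eqv (fword (p # v)) (\<lambda>w. phi p * fword v w))"

lemma wh_ctx: "whv v \<Longrightarrow> p \<in> P \<Longrightarrow> eqv (fword (pre @ p # v)) (\<lambda>w. phi p * fword (pre @ v) w)"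
  unfolding whv_def
  by (drule bspec, assumption, drule eqv_lmul[of "fword pre", rotated]) (auto simp: fword_mult fmul_scale_right)

abbreviation del :: "nat \<Rightarrow> 'g list \<Rightarrow> 'g list" where
  "del l u \<equiv> take l u @ drop (Suc l) u"

lemma set_del: "set (del l u) \<subseteq> set u"
  by (auto dest: in_set_takeD in_set_dropD)

lemma length_del: "l < length u \<Longrightarrow> length (del l u) = length u - 1"
  by simp

lemma moveP:
  assumes "a \<in> P" "whv v"
  shows "\<exists>R\<in>fspan {s @ v | s. set s \<subseteq> set u \<and> length s + 2 \<le> length u}.
     eqv (fword (a # u @ v))
       (\<lambda>w. phi a * fword (u @ v) w + (\<Sum>l<length u. phi (br a (u ! l)) * fword (del l u @ v) w) + R w)"
  using assms(1)
proof (induction u arbitrary: a)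
  case Nil
  have "eqv (fword (a # v)) (\<lambda>w. phi a * fword v w)"
    using wh_ctx[OF assms(2) Nil, of "[]"] by simp
  then show ?case by (intro bexI[of _ "\<lambda>w. 0"]) (auto simp: fspan_zero)
next
  case (Cons b u')
  let ?S = "{s @ v | s. set s \<subseteq> set (b # u') \<and> length s + 2 \<le> length (b # u')}"
  obtain R1 where R1: "R1 \<in> fspan {s @ v | s. set s \<subseteq> set u' \<and> length s + 2 \<le> length u'}"
    "eqv (fword (a # u' @ v))
       (\<lambda>w. phi a * fword (u' @ v) w + (\<Sum>l<length u'. phi (br a (u' ! l)) * fword (del l u' @ v) w) + R1 w)"
    using Cons.IH[OF Cons.prems] by blast
  have baP: "br a b \<in> P" using Cons.prems by (rule P_br_l)
  obtain R2 where R2: "R2 \<in> fspan {s @ v | s. set s \<subseteq> set u' \<and> length s + 2 \<le> length u'}"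
    "eqv (fword (br a b # u' @ v))
       (\<lambda>w. phi (br a b) * fword (u' @ v) w + (\<Sum>l<length u'. phi (br (br a b) (u' ! l)) * fword (del l u' @ v) w) + R2 w)"
    using Cons.IH[OF baP] by blast
  have 1: "eqv (fword (a # b # u' @ v)) (\<lambda>w. fword (b # a # u' @ v) w + fword (br a b # u' @ v) w)"
    using rel_br[of "[]" a b "u' @ v"] by simp
  have 2: "eqv (fword (b # a # u' @ v))
     (\<lambda>w. phi a * fword (b # u' @ v) w + (\<Sum>l<length u'. phi (br a (u' ! l)) * fword (b # del l u' @ v) w)
        + fmul (fword [b]) R1 w)"
    using eqv_lmul[OF fin_supp_fword R1(2), of "[b]"]
    by (simp add: fword_mult fmul_add_right fmul_scale_right fmul_sum_right)
  define R where "R = (\<lambda>w. fmul (fword [b]) R1 w + ((\<Sum>l<length u'. phi (br (br a b) (u' ! l)) * fword (del l u' @ v) w) + R2 w))"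
  have RS: "R \<in> fspan ?S"
    unfolding R_def
  proof (intro fspan_add fspan_sum fspan_scale fspan_word)
    show "fmul (fword [b]) R1 \<in> fspan ?S"
      by (rule fspan_lmul[OF R1(1)]) auto
    show "R2 \<in> fspan ?S" using R2(1) by (rule fspan_mono) auto
    fix l assume "l \<in> {..<length u'}"
    then show "del l u' @ v \<in> ?S"
      using set_del[of l u'] by (auto intro!: exI[of _ "del l u'"])
  qed simp
  have "eqv (fword (a # b # u' @ v))
     (\<lambda>w. (phi a * fword (b # u' @ v) w + (\<Sum>l<length u'. phi (br a (u' ! l)) * fword (b # del l u' @ v) w)
        + fmul (fword [b]) R1 w) +
        (phi (br a b) * fword (u' @ v) w + (\<Sum>l<length u'. phi (br (br a b) (u' ! l)) * fword (del l u' @ v) w) + R2 w))"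
    using eqv_trans[OF 1 eqv_add[OF 2 R2(2)]] .
  then have "eqv (fword (a # (b # u') @ v))
       (\<lambda>w. phi a * fword ((b # u') @ v) w + (\<Sum>l<length (b # u'). phi (br a ((b # u') ! l)) * fword (del l (b # u') @ v) w) + R w)"
  proof (rule eqv_cong)
    have sh: "\<And>F. (\<Sum>l<length (b # u'). F l) = F 0 + (\<Sum>l<length u'. F (Suc l))"
      by (simp only: length_Cons sum.lessThan_Suc_shift)
    fix w
    show "fword (a # b # u' @ v) w = fword (a # (b # u') @ v) w" by simp
    show "phi a * fword (b # u' @ v) w + (\<Sum>l<length u'. phi (br a (u' ! l)) * fword (b # del l u' @ v) w) + fmul (fword [b]) R1 w +
        (phi (br a b) * fword (u' @ v) w + (\<Sum>l<length u'. phi (br (br a b) (u' ! l)) * fword (del l u' @ v) w) + R2 w) =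
       phi a * fword ((b # u') @ v) w + (\<Sum>l<length (b # u'). phi (br a ((b # u') ! l)) * fword (del l (b # u') @ v) w) + R w"
      unfolding sh by (simp add: R_def algebra_simps)
  qed
  then show ?case using RS by blast
qed

lemma moveP':
  assumes "a \<in> P" "whv v"
  shows "\<exists>R\<in>fspan {s @ v | s. set s \<subseteq> set u \<and> length s < length u}.
     eqv (fword (a # u @ v)) (\<lambda>w. phi a * fword (u @ v) w + R w)"
proof -
  let ?S = "{s @ v | s. set s \<subseteq> set u \<and> length s < length u}"
  obtain R where R: "R \<in> fspan {s @ v | s. set s \<subseteq> set u \<and> length s + 2 \<le> length u}"
    "eqv (fword (a # u @ v))
       (\<lambda>w. phi a * fword (u @ v) w + (\<Sum>l<length u. phi (br a (u ! l)) * fword (del l u @ v) w) + R w)"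
    using moveP[OF assms] by blast
  define Rn where "Rn = (\<lambda>w. (\<Sum>l<length u. phi (br a (u ! l)) * fword (del l u @ v) w) + R w)"
  have "Rn \<in> fspan ?S" unfolding Rn_def
  proof (intro fspan_add fspan_sum fspan_scale fspan_word)
    show "R \<in> fspan ?S" using R(1) by (rule fspan_mono) auto
    fix l assume "l \<in> {..<length u}"
    then show "del l u @ v \<in> ?S"
      using set_del[of l u] by (auto intro!: exI[of _ "del l u"])
  qed simp
  moreover have "eqv (fword (a # u @ v)) (\<lambda>w. phi a * fword (u @ v) w + Rn w)"
    using R(2) by (rule eqv_cong) (simp_all add: algebra_simps Rn_def)
  ultimately show ?thesis by blast
qed

end


lemma (in vector_space) complement_exists:
  assumes G: "subspace G"
  shows "\<exists>X. subspace X \<and> (\<forall>a. \<exists>g\<in>G. \<exists>x\<in>X. a = g + x) \<and> (\<forall>x\<in>X. x \<in> G \<longrightarrow> x = 0)"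
proof -
  obtain B0 where B0: "B0 \<subseteq> G" "independent B0" "G \<subseteq> span B0"
    using maximal_independent_subset[of G] by blast
  define BB where "BB = extend_basis B0"
  have BB: "B0 \<subseteq> BB" "independent BB" "span BB = UNIV"
    using extend_basis_superset[OF B0(2)] independent_extend_basis[OF B0(2)] span_extend_basis[OF B0(2)]
    unfolding BB_def by auto
  have spanB0: "span B0 = G"
    using B0 G span_minimal[of B0 G] by blast
  define X where "X = span (BB - B0)"
  have "subspace X" unfolding X_def by simp
  moreover have "\<forall>a. \<exists>g\<in>G. \<exists>x\<in>X. a = g + x"
  proof
    fix a
    have "a \<in> span (B0 \<union> (BB - B0))" using BB by (simp add: Un_absorb1)
    then show "\<exists>g\<in>G. \<exists>x\<in>X. a = g + x" unfolding span_Un X_def spanB0[symmetric] by blast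
  qed
  moreover have "\<forall>x\<in>X. x \<in> G \<longrightarrow> x = 0"
  proof (intro ballI impI)
    fix x assume xX: "x \<in> X" and xG: "x \<in> G"
    obtain t1 r where t1: "finite t1" "t1 \<subseteq> B0" "x = (\<Sum>a\<in>t1. r a *s a)"
      using xG spanB0 unfolding span_explicit by blast
    obtain t2 s where t2: "finite t2" "t2 \<subseteq> BB - B0" "x = (\<Sum>a\<in>t2. s a *s a)"
      using xX unfolding X_def span_explicit by blast
    define u where "u a = (if a \<in> t1 then r a else - s a)" for a
    have disj: "t1 \<inter> t2 = {}" using t1 t2 by blast
    have "(\<Sum>a\<in>t1 \<union> t2. u a *s a) = (\<Sum>a\<in>t1. u a *s a) + (\<Sum>a\<in>t2. u a *s a)"
      using t1 t2 disj by (simp add: sum.union_disjoint)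
    also have "(\<Sum>a\<in>t1. u a *s a) = x" using t1 by (simp add: u_def)
    also have "(\<Sum>a\<in>t2. u a *s a) = (\<Sum>a\<in>t2. - (s a *s a))"
      by (rule sum.cong) (use disj in \<open>auto simp: u_def\<close>)
    also have "\<dots> = - x" by (simp add: sum_negf t2(3))
    finally have z: "(\<Sum>a\<in>t1 \<union> t2. u a *s a) = 0" by simp
    have "\<forall>a\<in>t1. r a = 0"
    proof
      fix a assume "a \<in> t1"
      then have "u a = 0" using independentD[OF BB(2) _ _ z, of a] t1 t2 BB by blast
      then show "r a = 0" using \<open>a \<in> t1\<close> by (simp add: u_def)
    qed
    then show "x = 0" using t1 by simp
  qed
  ultimately show ?thesis by blast
qed

locale WHY = WH smul br P phi
  for smul :: "complex \<Rightarrow> 'g::ab_group_add \<Rightarrow> 'g"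
    and br :: "'g \<Rightarrow> 'g \<Rightarrow> 'g"
    and P :: "'g set"
    and phi :: "'g \<Rightarrow> complex" +
  fixes y :: "'j::linorder \<Rightarrow> 'g"
    and J :: "'j set"
  assumes y_inj: "inj_on y J"
    and y_indep: "module.independent smul (y ` J)"
    and y_sub: "module.span smul (y ` J) \<subseteq> whittaker_annihilator br P phi"
    and y_cap: "module.span smul (y ` J) \<inter> P = {0}"
    and y_sum: "\<forall>g \<in> whittaker_annihilator br P phi.
                  \<exists>u \<in> module.span smul (y ` J). \<exists>p \<in> P. g = u + p"
begin

abbreviation SY where "SY \<equiv> V.span (y ` J)"
abbreviation G where "G \<equiv> whittaker_annihilator br P phi"

lemma G_sub: "V.subspace G"
proof (rule V.subspaceI)
  show "0 \<in> G" by (simp add: whittaker_annihilator_def)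
  fix a b assume "a \<in> G" "b \<in> G"
  then show "a + b \<in> G"
    by (auto simp: whittaker_annihilator_def br_add_l phi_add P_br_r)
next
  fix c a assume "a \<in> G"
  then show "smul c a \<in> G"
    by (auto simp: whittaker_annihilator_def br_smul_l phi_smul P_br_r)
qed

lemma P_sub_G: "P \<subseteq> G"
  by (auto simp: whittaker_annihilator_def phi_br)

lemma SY_sub_G: "SY \<subseteq> G" using y_sub by simp

lemma G_phi: "a \<in> G \<Longrightarrow> p \<in> P \<Longrightarrow> phi (br p a) = 0"
  using phi_neg[OF P_br_r[of p a]] br_anti[of p a] by (simp add: whittaker_annihilator_def)

lemma G_br: assumes "a \<in> G" "b \<in> G" shows "br a b \<in> G"
  unfolding whittaker_annihilator_def
proof (intro CollectI ballI)
  fix p assume p: "p \<in> P"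
  have j: "br a (br b p) + br b (br p a) + br p (br a b) = 0" by (rule jacobi)
  have "phi (br a (br b p)) = 0" using assms p P_br_r by (simp add: whittaker_annihilator_def)
  moreover have "phi (br b (br p a)) = 0" using assms p P_br_l by (simp add: whittaker_annihilator_def)
  moreover have "phi (br a (br b p) + br b (br p a) + br p (br a b)) =
     phi (br a (br b p)) + phi (br b (br p a)) + phi (br p (br a b))"
    using p by (simp add: phi_add P_add P_br_r P_br_l)
  ultimately have "phi (br p (br a b)) = 0" using j by simp
  then show "phi (br (br a b) p) = 0"
    using phi_neg[OF P_br_l[of p "br a b"]] br_anti[of "br a b" p] p by simp
qed

definition X where
  "X = (SOME X. V.subspace X \<and> (\<forall>a. \<exists>g\<in>G. \<exists>x\<in>X. a = g + x) \<and> (\<forall>x\<in>X. x \<in> G \<longrightarrow> x = 0))"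

lemma X_props: "V.subspace X" "\<forall>a. \<exists>g\<in>G. \<exists>x\<in>X. a = g + x" "\<forall>x\<in>X. x \<in> G \<longrightarrow> x = 0"
  using someI_ex[OF V.complement_exists[OF G_sub]] unfolding X_def by blast+

lemma decomp: "\<exists>p\<in>P. \<exists>u\<in>SY. \<exists>x\<in>X. a = (p + u) + x"
proof -
  obtain g x where "g \<in> G" "x \<in> X" "a = g + x" using X_props(2) by blast
  moreover obtain u p where "u \<in> SY" "p \<in> P" "g = u + p" using y_sum \<open>g \<in> G\<close> by blast
  ultimately show ?thesis by (metis add.commute)
qed

lemma sep: assumes "x \<in> X" "x \<noteq> 0" shows "\<exists>p\<in>P. phi (br p x) \<noteq> 0"
proof (rule ccontr)
  assume "\<not> (\<exists>p\<in>P. phi (br p x) \<noteq> 0)"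
  then have "\<forall>p\<in>P. phi (br x p) = 0"
    using phi_neg[OF P_br_l] br_anti by (metis neg_equal_0_iff_equal)
  then have "x \<in> G" by (simp add: whittaker_annihilator_def)
  then show False using X_props(3) assms by blast
qed

lemma WhY: "set v \<subseteq> SY \<Longrightarrow> whv v"
proof (induction v)
  case Nil
  show ?case unfolding whv_def
  proof
    fix p assume "p \<in> P"
    from rel_P[OF this, of "[]"] show "eqv (fword [p]) (\<lambda>w. phi p * fword [] w)" by simp
  qed
next
  case (Cons b v')
  then have IH: "whv v'" and bG: "b \<in> G" using SY_sub_G by auto
  show ?case unfolding whv_def
  proof
    fix p assume p: "p \<in> P"
    have "eqv (fword (p # b # v')) (\<lambda>w. fword (b # p # v') w + fword (br p b # v') w)"
      using rel_br[of "[]" p b v'] by simp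
    also have "eqv \<dots> (\<lambda>w. phi p * fword (b # v') w + phi (br p b) * fword v' w)"
      using wh_ctx[OF IH p, of "[b]"] wh_ctx[OF IH P_br_l[OF p], of "[]"]
      by (intro eqv_add) auto
    finally show "eqv (fword (p # b # v')) (\<lambda>w. phi p * fword (b # v') w)"
      using G_phi[OF bG p] by simp
  qed
qed

end

context WHY begin
definition NFS :: "nat \<Rightarrow> 'g list set" where
  "NFS n = {u @ v | u v. set u \<subseteq> X \<and> length u \<le> n \<and> set v \<subseteq> SY}"

lemma NFS_mono: "m \<le> n \<Longrightarrow> NFS m \<subseteq> NFS n"
  unfolding NFS_def by (smt (verit) Collect_mono_iff order_trans)

lemma NFS_I: "set u \<subseteq> X \<Longrightarrow> length u \<le> n \<Longrightarrow> set v \<subseteq> SY \<Longrightarrow> u @ v \<in> NFS n"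
  unfolding NFS_def by blast

lemma normalize_combine:
  assumes uX: "set u \<subseteq> X" and vY: "set v \<subseteq> SY"
    and Yc: "\<And>b. b \<in> SY \<Longrightarrow> red (NFS (Suc (length u))) (fword (b # u @ v))"
  shows "red (NFS (Suc (length u))) (fword (a # u @ v))"
proof -
  obtain p u0 x where pux: "p \<in> P" "u0 \<in> SY" "x \<in> X" "a = (p + u0) + x" using decomp by blast
  let ?T = "NFS (Suc (length u))"
  have e: "eqv (fword (a # u @ v)) (\<lambda>w. (fword (p # u @ v) w + fword (u0 # u @ v) w) + fword (x # u @ v) w)"
    unfolding pux(4) using eqv_trans[OF rel_add[of "[]" "p + u0" x "u @ v"] eqv_add[OF rel_add[of "[]" p u0 "u @ v"] eqv_refl]]
    by simp
  obtain R where R: "R \<in> fspan {s @ v | s. set s \<subseteq> set u \<and> length s < length u}"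
    "eqv (fword (p # u @ v)) (\<lambda>w. phi p * fword (u @ v) w + R w)"
    using moveP'[OF pux(1) WhY[OF vY]] by blast
  have "red ?T (fword (p # u @ v))"
  proof (rule red_eqv[OF R(2)], intro red_add red_scale red_word red_fspan)
    show "u @ v \<in> ?T" using uX vY by (intro NFS_I) auto
    have "{s @ v | s. set s \<subseteq> set u \<and> length s < length u} \<subseteq> ?T"
    proof (rule subsetI)
      fix z assume "z \<in> {s @ v | s. set s \<subseteq> set u \<and> length s < length u}"
      then obtain s where "z = s @ v" "set s \<subseteq> set u" "length s < length u" by blast
      then show "z \<in> ?T" using uX vY NFS_I[of s "Suc (length u)" v] by auto
    qed
    then show "R \<in> fspan ?T" by (rule fspan_mono[OF R(1)])
  qed
  moreover have "red ?T (fword (u0 # u @ v))" using Yc pux(2) by blast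
  moreover have "red ?T (fword (x # u @ v))"
    using NFS_I[of "x # u" "Suc (length u)" v] uX vY pux(3) by (intro red_word) simp
  ultimately show ?thesis by (intro red_eqv[OF e] red_add)
qed

lemma normalize1:
  assumes "set u \<subseteq> X" "set v \<subseteq> SY"
  shows "red (NFS (Suc (length u))) (fword (a # u @ v))"
  using assms(1)
proof (induction u arbitrary: a)
  case Nil
  show ?case
  proof (rule normalize_combine)
    fix b assume "b \<in> SY"
    have "b # [] @ v \<in> NFS (Suc (length []))"
      unfolding NFS_def by (rule CollectI, rule exI[of _ "[]"], rule exI[of _ "b # v"]) (use assms(2) \<open>b \<in> SY\<close> in simp)
    then show "red (NFS (Suc (length []))) (fword (b # [] @ v))" by (rule red_word)
  qed (use assms(2) in auto)
next
  case (Cons x u')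
  have xX: "x \<in> X" and u'X: "set u' \<subseteq> X" using Cons.prems by auto
  show ?case
  proof (rule normalize_combine)
    fix b assume bY: "b \<in> SY"
    let ?T = "NFS (Suc (length (x # u')))"
    have e: "eqv (fword (b # (x # u') @ v)) (\<lambda>w. fword (x # b # u' @ v) w + fword (br b x # u' @ v) w)"
      using rel_br[of "[]" b x "u' @ v"] by simp
    have "red (NFS (Suc (length u'))) (fword (b # u' @ v))" using Cons.IH[OF u'X] .
    then have "red ?T (fmul (fword [x]) (fword (b # u' @ v)))"
    proof (rule red_lmul)
      fix w assume "w \<in> NFS (Suc (length u'))"
      then obtain u1 v1 where "w = u1 @ v1" "set u1 \<subseteq> X" "length u1 \<le> Suc (length u')" "set v1 \<subseteq> SY"
        unfolding NFS_def by blast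
      then show "[x] @ w \<in> ?T" using xX unfolding NFS_def
        by (intro CollectI exI[of _ "x # u1"] exI[of _ v1]) auto
    qed
    moreover have "red ?T (fword (br b x # u' @ v))"
      using Cons.IH[OF u'X] by (rule red_mono) (rule NFS_mono, simp)
    ultimately show "red ?T (fword (b # (x # u') @ v))"
      by (intro red_eqv[OF e] red_add) (simp_all add: fword_mult)
  qed (use Cons.prems assms(2) in auto)
qed

lemma normalize_word: "red (NFS (length w)) (fword w)"
proof (induction w)
  case Nil
  show ?case by (rule red_word) (auto simp: NFS_def)
next
  case (Cons a w')
  have "red {[a] @ z | z. z \<in> NFS (length w')} (fmul (fword [a]) (fword w'))"
    using Cons.IH by (rule red_lmul) blast
  then have "red (NFS (length (a # w'))) (fmul (fword [a]) (fword w'))"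
  proof (rule red_trans)
    fix z assume "z \<in> {[a] @ z | z. z \<in> NFS (length w')}"
    then obtain u v where uv: "z = a # u @ v" "set u \<subseteq> X" "length u \<le> length w'" "set v \<subseteq> SY"
      unfolding NFS_def by auto
    have "red (NFS (Suc (length u))) (fword (a # u @ v))" by (rule normalize1[OF uv(2) uv(4)])
    then have "red (NFS (length (a # w'))) (fword (a # u @ v))"
      by (rule red_mono) (rule NFS_mono, use uv(3) in simp)
    then show "red (NFS (length (a # w'))) (fword z)" using uv(1) by simp
  qed
  then show ?case by (simp add: fword_mult)
qed

lemma normalize_fin: assumes "fin_supp f" shows "\<exists>n. red (NFS n) f"
proof -
  let ?A = "{w. f w \<noteq> 0}"
  have fA: "finite ?A" using assms by (simp add: fin_supp_def)
  define n where "n = (\<Sum>w\<in>?A. length w)"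
  have "f \<in> fspan ?A" using assms by (simp add: fspan_def)
  then have "red (NFS n) f"
  proof (rule red_fspan_trans)
    fix u assume "u \<in> ?A"
    then have "length u \<le> n" unfolding n_def using fA by (intro member_le_sum) auto
    then show "red (NFS n) (fword u)" by (rule red_mono[OF normalize_word NFS_mono])
  qed
  then show ?thesis by blast
qed

end


context WH begin

definition lam :: "'g \<Rightarrow> 'g \<Rightarrow> complex" where "lam p a = phi (br p a)"

lemma lam_add_r: "p \<in> P \<Longrightarrow> lam p (a + b) = lam p a + lam p b"
  unfolding lam_def by (simp add: br_add_r phi_add P_br_l)
lemma lam_smul_r: "p \<in> P \<Longrightarrow> lam p (smul c a) = c * lam p a"
  unfolding lam_def by (simp add: br_smul_r phi_smul P_br_l)
lemma lam_diff_r: "p \<in> P \<Longrightarrow> lam p (a - b) = lam p a - lam p b"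
  unfolding lam_def by (simp add: br_diff_r phi_diff P_br_l)
lemma lam_sum_r: "p \<in> P \<Longrightarrow> lam p (\<Sum>i\<in>I. f i) = (\<Sum>i\<in>I. lam p (f i))"
  unfolding lam_def by (simp add: br_sum_r phi_sum P_br_l)
lemma lam_add_l: "p \<in> P \<Longrightarrow> q \<in> P \<Longrightarrow> lam (p + q) a = lam p a + lam q a"
  unfolding lam_def by (simp add: br_add_l phi_add P_br_l)
lemma lam_smul_l: "p \<in> P \<Longrightarrow> lam (smul c p) a = c * lam p a"
  unfolding lam_def by (simp add: br_smul_l phi_smul P_br_l)
lemma lam_diff_l: "p \<in> P \<Longrightarrow> q \<in> P \<Longrightarrow> lam (p - q) a = lam p a - lam q a"
  unfolding lam_def by (simp add: br_diff_l phi_diff P_br_l)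
lemma lam_sum_l: "(\<And>i. i \<in> I \<Longrightarrow> f i \<in> P) \<Longrightarrow> lam (\<Sum>i\<in>I. f i) a = (\<Sum>i\<in>I. lam (f i) a)"
  unfolding lam_def by (simp add: br_sum_l phi_sum P_br_l)

end

context WHY begin

definition dual :: "('g \<times> 'g) set \<Rightarrow> 'g set \<Rightarrow> bool" where
  "dual ds A \<longleftrightarrow> finite ds \<and> (\<forall>d\<in>ds. fst d \<in> X \<and> snd d \<in> P) \<and>
     (\<forall>d\<in>ds. \<forall>d'\<in>ds. lam (snd d) (fst d') = (if d = d' then 1 else 0)) \<and>
     (\<forall>a\<in>A. a = (\<Sum>d\<in>ds. smul (lam (snd d) a) (fst d)))"

lemma X_sum: "(\<And>i. i \<in> I \<Longrightarrow> f i \<in> X) \<Longrightarrow> (\<Sum>i\<in>I. f i) \<in> X"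
  using X_props(1) V.subspace_sum by blast
lemma X_smul: "a \<in> X \<Longrightarrow> smul c a \<in> X"
  using X_props(1) V.subspace_scale by blast
lemma X_diff: "a \<in> X \<Longrightarrow> b \<in> X \<Longrightarrow> a - b \<in> X"
  using X_props(1) V.subspace_diff by blast

lemma dual_exists: "finite A \<Longrightarrow> A \<subseteq> X \<Longrightarrow> \<exists>ds. dual ds A"
proof (induction A rule: finite_induct)
  case empty
  show ?case by (rule exI[of _ "{}"]) (simp add: dual_def)
next
  case (insert a A)
  then obtain ds where ds: "dual ds A" by auto
  have fin: "finite ds" and dsXP: "\<And>d. d \<in> ds \<Longrightarrow> fst d \<in> X \<and> snd d \<in> P"
    and delta: "\<And>d d'. d \<in> ds \<Longrightarrow> d' \<in> ds \<Longrightarrow> lam (snd d) (fst d') = (if d = d' then 1 else 0)"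
    and rep: "\<And>b. b \<in> A \<Longrightarrow> b = (\<Sum>d\<in>ds. smul (lam (snd d) b) (fst d))"
    using ds unfolding dual_def by auto
  have aX: "a \<in> X" using insert by auto
  define a2 where "a2 = a - (\<Sum>d\<in>ds. smul (lam (snd d) a) (fst d))"
  have a2X: "a2 \<in> X" unfolding a2_def using aX dsXP by (intro X_diff X_sum X_smul) auto
  have lam_a2: "lam (snd d) a2 = 0" if "d \<in> ds" for d
  proof -
    have "lam (snd d) a2 = lam (snd d) a - (\<Sum>d'\<in>ds. lam (snd d') a * lam (snd d) (fst d'))"
      unfolding a2_def using dsXP that by (simp add: lam_diff_r lam_sum_r lam_smul_r)
    also have "(\<Sum>d'\<in>ds. lam (snd d') a * lam (snd d) (fst d')) = (\<Sum>d'\<in>ds. if d = d' then lam (snd d') a else 0)"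
      by (rule sum.cong) (auto simp: delta that)
    also have "\<dots> = lam (snd d) a" using fin that by (simp add: sum.delta)
    finally show ?thesis by simp
  qed
  show ?case
  proof (cases "a2 = 0")
    case True
    then have "a = (\<Sum>d\<in>ds. smul (lam (snd d) a) (fst d))" unfolding a2_def by simp
    then show ?thesis using ds by (intro exI[of _ ds]) (auto simp: dual_def)
  next
    case False
    obtain p0 where p0: "p0 \<in> P" "lam p0 a2 \<noteq> 0" using sep[OF a2X False] unfolding lam_def by blast
    define p1 where "p1 = smul (1 / lam p0 a2) p0"
    have p1P: "p1 \<in> P" unfolding p1_def using p0(1) by (rule P_smul)
    have lp1: "lam p1 a2 = 1" unfolding p1_def using p0 by (simp add: lam_smul_l)
    define p2 where "p2 = p1 - (\<Sum>d\<in>ds. smul (lam p1 (fst d)) (snd d))"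
    have p2P: "p2 \<in> P" unfolding p2_def using p1P dsXP by (intro P_diff P_sum P_smul) auto
    have lam_p2: "lam p2 b = lam p1 b - (\<Sum>d\<in>ds. lam p1 (fst d) * lam (snd d) b)" for b
      unfolding p2_def using p1P dsXP
      by (simp add: lam_diff_l P_sum P_smul lam_sum_l lam_smul_l)
    have lp2x: "lam p2 (fst d0) = 0" if "d0 \<in> ds" for d0
    proof -
      have "(\<Sum>d\<in>ds. lam p1 (fst d) * lam (snd d) (fst d0)) = (\<Sum>d\<in>ds. if d = d0 then lam p1 (fst d) else 0)"
        by (rule sum.cong) (auto simp: delta that)
      also have "\<dots> = lam p1 (fst d0)" using fin that by (simp add: sum.delta')
      finally show ?thesis using lam_p2 by simp
    qed
    have lp2a2: "lam p2 a2 = 1" using lam_p2[of a2] lp1 lam_a2 by simp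
    define new where "new = (a2, p2)"
    have new_notin: "new \<notin> ds" using lam_a2 lp2a2 unfolding new_def by fastforce
    define ds' where "ds' = insert new ds"
    have lp2_lin: "lam p2 (\<Sum>d\<in>ds. smul (lam (snd d) b) (fst d)) = 0" for b
      using p2P lp2x by (simp add: lam_sum_r lam_smul_r)
    have c2: "\<forall>d\<in>ds'. fst d \<in> X \<and> snd d \<in> P"
    proof
      fix d assume "d \<in> ds'"
      then have "d = new \<or> d \<in> ds" by (simp add: ds'_def)
      then show "fst d \<in> X \<and> snd d \<in> P" using dsXP[of d] a2X p2P by (auto simp: new_def)
    qed
    have c3: "\<forall>d\<in>ds'. \<forall>d'\<in>ds'. lam (snd d) (fst d') = (if d = d' then 1 else 0)"
    proof (intro ballI)
      fix d d' assume "d \<in> ds'" "d' \<in> ds'"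
      then have h: "d = new \<or> d \<in> ds" "d' = new \<or> d' \<in> ds" by (auto simp: ds'_def)
      show "lam (snd d) (fst d') = (if d = d' then 1 else 0)"
      proof (cases "d = new")
        case True
        show ?thesis
        proof (cases "d' = new")
          case True
          then show ?thesis using \<open>d = new\<close> lp2a2 by (simp add: new_def)
        next
          case False
          then have "d' \<in> ds" using h by simp
          then show ?thesis using \<open>d = new\<close> lp2x[of d'] new_notin by (auto simp: new_def)
        qed
      next
        case False
        then have dds: "d \<in> ds" using h by simp
        show ?thesis
        proof (cases "d' = new")
          case True
          then show ?thesis using dds lam_a2[of d] new_notin by (auto simp: new_def)
        next
          case False
          then have "d' \<in> ds" using h by simp
          then show ?thesis using dds delta by blast
        qed
      qed
    qed
    have c4: "\<forall>b\<in>insert a A. b = (\<Sum>d\<in>ds'. smul (lam (snd d) b) (fst d))"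
    proof
      fix b assume b: "b \<in> insert a A"
      have s: "(\<Sum>d\<in>ds'. smul (lam (snd d) b) (fst d)) = smul (lam p2 b) a2 + (\<Sum>d\<in>ds. smul (lam (snd d) b) (fst d))"
        using fin new_notin by (simp add: ds'_def new_def)
      show "b = (\<Sum>d\<in>ds'. smul (lam (snd d) b) (fst d))"
      proof (cases "b = a")
        case True
        have "a = a2 + (\<Sum>d\<in>ds. smul (lam (snd d) a) (fst d))" unfolding a2_def by simp
        then have "lam p2 a = lam p2 a2 + lam p2 (\<Sum>d\<in>ds. smul (lam (snd d) a) (fst d))"
          using p2P by (metis lam_add_r)
        then have "lam p2 a = 1" using lp2a2 lp2_lin by simp
        then show ?thesis using s True unfolding a2_def by simp
      next
        case False
        then have bA: "b \<in> A" using b by simp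
        have "lam p2 b = 0" using rep[OF bA] lp2_lin[of b] by simp
        then show ?thesis using s rep[OF bA] by simp
      qed
    qed
    have "dual ds' (insert a A)"
      unfolding dual_def using c2 c3 c4 fin by (simp add: ds'_def)
    then show ?thesis by blast
  qed
qed

end


context WH begin

definition Ep :: "'g \<Rightarrow> ('g list \<Rightarrow> complex) \<Rightarrow> ('g list \<Rightarrow> complex)" where
  "Ep p f = (\<lambda>w. fmul (fgen p) f w - phi p * f w)"

definition Gop :: "('g \<times> 'g) set \<Rightarrow> ('g list \<Rightarrow> complex) \<Rightarrow> ('g list \<Rightarrow> complex)" where
  "Gop ds f = (\<lambda>w. \<Sum>d\<in>ds. fmul (fgen (fst d)) (Ep (snd d) f) w)"

lemma Ep_word: "Ep p (fword u) = (\<lambda>w. fword (p # u) w - phi p * fword u w)"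
  by (simp add: Ep_def fgen_def fword_mult)
lemma Ep_add: "Ep p (\<lambda>w. f w + g w) = (\<lambda>w. Ep p f w + Ep p g w)"
  by (simp add: Ep_def fmul_add_right algebra_simps)
lemma Ep_diff: "Ep p (\<lambda>w. f w - g w) = (\<lambda>w. Ep p f w - Ep p g w)"
  by (simp add: Ep_def fmul_diff_right algebra_simps)
lemma Ep_scale: "Ep p (\<lambda>w. c * f w) = (\<lambda>w. c * Ep p f w)"
  by (simp add: Ep_def fmul_scale_right algebra_simps)
lemma Ep_zero: "Ep p (\<lambda>w. 0) = (\<lambda>w. 0)"
  by (simp add: Ep_def fmul_zero_right)

lemma Gop_add: "Gop ds (\<lambda>w. f w + g w) = (\<lambda>w. Gop ds f w + Gop ds g w)"
  by (simp add: Gop_def Ep_add fmul_add_right sum.distrib)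
lemma Gop_diff: "Gop ds (\<lambda>w. f w - g w) = (\<lambda>w. Gop ds f w - Gop ds g w)"
  by (simp add: Gop_def Ep_diff fmul_diff_right sum_subtractf)
lemma Gop_scale: "Gop ds (\<lambda>w. c * f w) = (\<lambda>w. c * Gop ds f w)"
  by (simp add: Gop_def Ep_scale fmul_scale_right sum_distrib_left)
lemma Gop_zero: "Gop ds (\<lambda>w. 0) = (\<lambda>w. 0)"
  by (simp add: Gop_def Ep_zero fmul_zero_right)

lemma Ep_eqv: "eqv f g \<Longrightarrow> eqv (Ep p f) (Ep p g)"
proof -
  assume "eqv f g"
  then have h0: "(\<lambda>w. f w - g w) \<in> W" by (simp add: eqv_def)
  have h: "(\<lambda>w. fmul (fgen p) (\<lambda>w. f w - g w) w - phi p * (f w - g w)) \<in> W"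
    using W_diff[OF W_lmul[OF h0 fin_supp_fgen] W_scale[OF h0]] by simp
  show ?thesis unfolding eqv_def
    by (rule W_ext[OF h]) (simp add: Ep_def fmul_diff_right algebra_simps)
qed

lemma Gop_eqv: "eqv f g \<Longrightarrow> eqv (Gop ds f) (Gop ds g)"
  unfolding Gop_def by (intro eqv_sum eqv_lmul Ep_eqv) auto

lemma Gop_W: "(\<And>d. d \<in> ds \<Longrightarrow> Ep (snd d) f \<in> W) \<Longrightarrow> Gop ds f \<in> W"
  unfolding Gop_def by (intro W_sum W_lmul) auto

end

context WHY begin

lemma move_front:
  assumes "x \<in> X" "set pre \<subseteq> X" "set post \<subseteq> X" "set v \<subseteq> SY"
  shows "red (NFS (length pre + length post)) (\<lambda>w. fword (x # pre @ post @ v) w - fword (pre @ x # post @ v) w)"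
  using assms(2)
proof (induction pre)
  case Nil
  show ?case by (rule red_cong[OF red_zero]) simp
next
  case (Cons b pre')
  have bX: "b \<in> X" and pX: "set pre' \<subseteq> X" using Cons.prems by auto
  let ?T = "NFS (length (b # pre') + length post)"
  have e: "eqv (fword (x # b # pre' @ post @ v)) (\<lambda>w. fword (b # x # pre' @ post @ v) w + fword (br x b # pre' @ post @ v) w)"
    using rel_br[of "[]" x b "pre' @ post @ v"] by simp
  have r1: "red ?T (fword (br x b # (pre' @ post) @ v))"
    using normalize1[of "pre' @ post" v "br x b"] pX assms(3,4) by simp
  have "red {[b] @ z | z. z \<in> NFS (length pre' + length post)}
      (fmul (fword [b]) (\<lambda>w. fword (x # pre' @ post @ v) w - fword (pre' @ x # post @ v) w))"
    using Cons.IH[OF pX] by (rule red_lmul) blast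
  moreover have "{[b] @ z | z. z \<in> NFS (length pre' + length post)} \<subseteq> ?T"
  proof (rule subsetI)
    fix z assume "z \<in> {[b] @ z | z. z \<in> NFS (length pre' + length post)}"
    then obtain u1 v1 where "z = b # u1 @ v1" "set u1 \<subseteq> X" "length u1 \<le> length pre' + length post" "set v1 \<subseteq> SY"
      unfolding NFS_def by auto
    then show "z \<in> ?T" using NFS_I[of "b # u1" "length (b # pre') + length post" v1] bX by simp
  qed
  ultimately have "red ?T (fmul (fword [b]) (\<lambda>w. fword (x # pre' @ post @ v) w - fword (pre' @ x # post @ v) w))"
    by (rule red_mono)
  then have r2: "red ?T (\<lambda>w. fword (b # x # pre' @ post @ v) w - fword (b # pre' @ x # post @ v) w)"
    by (simp add: fmul_diff_right fword_mult)
  have "red ?T (\<lambda>w. (fword (b # x # pre' @ post @ v) w - fword (b # pre' @ x # post @ v) w) + fword (br x b # (pre' @ post) @ v) w)"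
    using r1 r2 by (rule red_add[rotated])
  then have "red ?T (\<lambda>w. (fword (b # x # pre' @ post @ v) w + fword (br x b # pre' @ post @ v) w) - fword (b # pre' @ x # post @ v) w)"
    by (rule red_cong) simp
  then show ?case by (rule red_eqv[rotated]) (simp add: eqv_diff[OF e eqv_refl])
qed


lemma euler_word:
  assumes ds: "dual ds A" and AX: "A \<subseteq> X" and uA: "set u \<subseteq> A" and vY: "set v \<subseteq> SY"
  shows "red (NFS (length u - 1)) (\<lambda>w. of_nat (length u) * fword (u @ v) w - Gop ds (fword (u @ v)) w)"
proof -
  have fin: "finite ds" and dsXP: "\<And>d. d \<in> ds \<Longrightarrow> fst d \<in> X \<and> snd d \<in> P"
    and rep: "\<And>b. b \<in> A \<Longrightarrow> b = (\<Sum>d\<in>ds. smul (lam (snd d) b) (fst d))"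
    using ds unfolding dual_def by auto
  have uX: "set u \<subseteq> X" using uA AX by blast
  let ?T = "NFS (length u - 1)"
  let ?S = "{s @ v | s. set s \<subseteq> set u \<and> length s + 2 \<le> length u}"
  have "\<forall>d\<in>ds. \<exists>R. R \<in> fspan ?S \<and> eqv (fword (snd d # u @ v))
       (\<lambda>w. phi (snd d) * fword (u @ v) w + (\<Sum>l<length u. phi (br (snd d) (u ! l)) * fword (del l u @ v) w) + R w)"
    using moveP[OF _ WhY[OF vY]] dsXP by blast
  from bchoice[OF this] obtain R where R: "\<forall>d\<in>ds. R d \<in> fspan ?S \<and> eqv (fword (snd d # u @ v))
       (\<lambda>w. phi (snd d) * fword (u @ v) w + (\<Sum>l<length u. phi (br (snd d) (u ! l)) * fword (del l u @ v) w) + R d w)"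
    by blast
  have E2: "eqv (fmul (fgen (fst d)) (Ep (snd d) (fword (u @ v))))
      (\<lambda>w. (\<Sum>l<length u. lam (snd d) (u ! l) * fword (fst d # del l u @ v) w) + fmul (fword [fst d]) (R d) w)"
    if d: "d \<in> ds" for d
  proof -
    have "eqv (Ep (snd d) (fword (u @ v)))
      (\<lambda>w. (phi (snd d) * fword (u @ v) w + (\<Sum>l<length u. phi (br (snd d) (u ! l)) * fword (del l u @ v) w) + R d w)
           - phi (snd d) * fword (u @ v) w)"
      unfolding Ep_word using R d by (intro eqv_diff) auto
    then have "eqv (Ep (snd d) (fword (u @ v)))
      (\<lambda>w. (\<Sum>l<length u. lam (snd d) (u ! l) * fword (del l u @ v) w) + R d w)"
      by (rule eqv_cong) (simp_all add: lam_def)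
    from eqv_lmul[OF fin_supp_fgen this, of "fst d"] show ?thesis
      by (simp add: fgen_def fmul_add_right fmul_sum_right fmul_scale_right fword_mult)
  qed
  define H1 where "H1 = (\<lambda>w. \<Sum>l<length u. fword (u ! l # del l u @ v) w)"
  define H2 where "H2 = (\<lambda>w. \<Sum>d\<in>ds. fmul (fword [fst d]) (R d) w)"
  have E3: "eqv (\<lambda>w. \<Sum>d\<in>ds. lam (snd d) (u ! l) * fword (fst d # del l u @ v) w) (fword (u ! l # del l u @ v))"
    if l: "l < length u" for l
  proof -
    have ul: "u ! l \<in> A" using uA l nth_mem by blast
    have "eqv (fword ([] @ (\<Sum>d\<in>ds. smul (lam (snd d) (u ! l)) (fst d)) # del l u @ v))
       (\<lambda>w. \<Sum>d\<in>ds. lam (snd d) (u ! l) * fword ([] @ fst d # del l u @ v) w)"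
      using fin by (rule rel_lin)
    then show ?thesis using rep[OF ul] by (simp add: eqv_sym)
  qed
  have "eqv (Gop ds (fword (u @ v)))
     (\<lambda>w. \<Sum>d\<in>ds. (\<Sum>l<length u. lam (snd d) (u ! l) * fword (fst d # del l u @ v) w) + fmul (fword [fst d]) (R d) w)"
    unfolding Gop_def by (intro eqv_sum E2)
  also have "eqv \<dots> (\<lambda>w. (\<Sum>l<length u. (\<Sum>d\<in>ds. lam (snd d) (u ! l) * fword (fst d # del l u @ v) w)) + H2 w)"
    by (rule eqv_cong[OF eqv_refl]) (simp_all add: H2_def sum.distrib sum.swap[of _ ds])
  also have "eqv \<dots> (\<lambda>w. H1 w + H2 w)"
    unfolding H1_def by (intro eqv_add eqv_sum E3 eqv_refl) simp
  finally have G: "eqv (Gop ds (fword (u @ v))) (\<lambda>w. H1 w + H2 w)" .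
  have rH2: "red ?T H2" unfolding H2_def
  proof (intro red_fspan fspan_sum)
    fix d assume d: "d \<in> ds"
    show "fmul (fword [fst d]) (R d) \<in> fspan ?T"
    proof (rule fspan_lmul)
      show "R d \<in> fspan ?S" using R d by blast
      fix z assume "z \<in> ?S"
      then obtain s where "z = s @ v" "set s \<subseteq> set u" "length s + 2 \<le> length u" by blast
      then show "[fst d] @ z \<in> ?T" using NFS_I[of "fst d # s" "length u - 1" v] dsXP[OF d] uX vY by auto
    qed
  qed (use fin in auto)
  define D where "D = (\<lambda>w. \<Sum>l<length u. fword (u ! l # del l u @ v) w - fword (u @ v) w)"
  have rD: "red ?T D" unfolding D_def
  proof (rule red_sum)
    fix l assume "l \<in> {..<length u}"
    then have l: "l < length u" by simp
    have "red (NFS (length (take l u) + length (drop (Suc l) u)))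
      (\<lambda>w. fword (u ! l # take l u @ drop (Suc l) u @ v) w - fword (take l u @ u ! l # drop (Suc l) u @ v) w)"
      using l uX vY by (intro move_front) (auto dest: in_set_takeD in_set_dropD)
    moreover have "take l u @ u ! l # drop (Suc l) u @ v = u @ v"
      using id_take_nth_drop[OF l] by (metis append.assoc append_Cons)
    moreover have "length (take l u) + length (drop (Suc l) u) = length u - 1" using l by simp
    ultimately show "red ?T (\<lambda>w. fword (u ! l # del l u @ v) w - fword (u @ v) w)" by simp
  qed
  have "red ?T (\<lambda>w. (- 1) * D w - H2 w)" using rD rH2 by (intro red_diff red_scale)
  then have "red ?T (\<lambda>w. of_nat (length u) * fword (u @ v) w - (H1 w + H2 w))"
    by (rule red_cong) (simp add: D_def H1_def sum_subtractf algebra_simps)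
  then show ?thesis by (rule red_eqv[rotated]) (rule eqv_diff[OF eqv_refl G])
qed

definition NFSA :: "'g set \<Rightarrow> nat \<Rightarrow> 'g list set" where
  "NFSA A n = {u @ v | u v. set u \<subseteq> A \<and> length u \<le> n \<and> set v \<subseteq> SY}"

lemma euler_span:
  assumes ds: "dual ds A" and AX: "A \<subseteq> X" and h: "h \<in> fspan (NFSA A n)"
  shows "red (NFS (n - 1)) (\<lambda>w. of_nat n * h w - Gop ds h w)"
  using h
proof (induction rule: fspan_induct)
  case zero
  show ?case by (rule red_cong[OF red_zero]) (simp add: Gop_zero)
next
  case (add f g)
  from red_add[OF add] show ?case by (rule red_cong) (simp add: Gop_add algebra_simps)
next
  case (scale f c)
  from red_scale[OF scale, of c] show ?case by (rule red_cong) (simp add: Gop_scale algebra_simps)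
next
  case (word z)
  then obtain u v where z: "z = u @ v" "set u \<subseteq> A" "length u \<le> n" "set v \<subseteq> SY"
    unfolding NFSA_def by blast
  have r1: "red (NFS (n - 1)) (\<lambda>w. of_nat (length u) * fword (u @ v) w - Gop ds (fword (u @ v)) w)"
    using euler_word[OF ds AX z(2) z(4)] by (rule red_mono) (rule NFS_mono, use z(3) in simp)
  have r2: "red (NFS (n - 1)) (\<lambda>w. of_nat (n - length u) * fword (u @ v) w)"
  proof (cases "length u = n")
    case True
    then show ?thesis by (intro red_cong[OF red_zero]) simp
  next
    case False
    then have "u @ v \<in> NFS (n - 1)" using z AX by (intro NFS_I) auto
    then show ?thesis by (intro red_scale red_word)
  qed
  from red_add[OF r2 r1] have "red (NFS (n - 1)) (\<lambda>w. of_nat n * fword (u @ v) w - Gop ds (fword (u @ v)) w)"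
    by (rule red_cong) (simp add: z(3) of_nat_diff algebra_simps)
  then show ?case using z(1) by simp
qed

lemma main_step:
  assumes wh: "\<forall>p\<in>P. Ep p f \<in> W" and r: "red (NFS n) f" and n: "0 < n"
  shows "red (NFS (n - 1)) f"
proof -
  obtain h where h: "h \<in> fspan (NFS n)" "eqv f h" using r unfolding red_def by blast
  define A where "A = X \<inter> (\<Union>w\<in>{w. h w \<noteq> 0}. set w)"
  have fA: "finite A" unfolding A_def using h(1) by (auto simp: fspan_def fin_supp_def)
  have AX: "A \<subseteq> X" unfolding A_def by blast
  obtain ds where ds: "dual ds A" using dual_exists[OF fA AX] by blast
  have hA: "h \<in> fspan (NFSA A n)"
    unfolding fspan_def
  proof (intro CollectI conjI allI impI)
    show "fin_supp h" using h(1) by (simp add: fspan_def)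
    fix w assume hw: "h w \<noteq> 0"
    then have "w \<in> NFS n" using h(1) by (simp add: fspan_def)
    then obtain u v where uv: "w = u @ v" "set u \<subseteq> X" "length u \<le> n" "set v \<subseteq> SY"
      unfolding NFS_def by blast
    have "set u \<subseteq> A" unfolding A_def using uv hw by auto
    then show "w \<in> NFSA A n" unfolding NFSA_def using uv by blast
  qed
  have e: "red (NFS (n - 1)) (\<lambda>w. of_nat n * h w - Gop ds h w)" by (rule euler_span[OF ds AX hA])
  have "Gop ds f \<in> W" using ds wh by (intro Gop_W) (auto simp: dual_def)
  then have "eqv (Gop ds h) (\<lambda>w. 0)"
    using Gop_eqv[OF eqv_sym[OF h(2)], of ds] by (simp add: eqv_W[symmetric] eqv_trans)
  from eqv_diff[OF eqv_refl[of "\<lambda>w. of_nat n * h w"] eqv_sym[OF this]]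
  have "eqv (\<lambda>w. of_nat n * h w) (\<lambda>w. of_nat n * h w - Gop ds h w)" by simp
  then have "red (NFS (n - 1)) (\<lambda>w. of_nat n * h w)" using e by (rule red_eqv)
  then have "red (NFS (n - 1)) (\<lambda>w. (1 / of_nat n) * (of_nat n * h w))" by (rule red_scale)
  then have "red (NFS (n - 1)) h" by (rule red_cong) (use n in simp)
  then show ?thesis using h(2) by (rule red_eqv[rotated])
qed

lemma whittaker_NF0:
  assumes wh: "\<forall>p\<in>P. Ep p f \<in> W" and r: "red (NFS n) f"
  shows "red (NFS 0) f"
  using r
proof (induction n)
  case (Suc n)
  then show ?case using main_step[OF wh Suc.prems] by simp
qed simp

end


context WHY begin

lemma y_SY: "j \<in> J \<Longrightarrow> y j \<in> SY"
  by (rule V.span_base) simp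

lemma map_y_SY: "set js \<subseteq> J \<Longrightarrow> set (map y js) \<subseteq> SY"
  using y_SY by auto

lemma expand_letter:
  assumes a: "a \<in> SY" and IH: "red {map y js | js. set js \<subseteq> J \<and> length js = length w'} (fword w')"
  shows "red {map y js | js. set js \<subseteq> J \<and> length js = Suc (length w')} (fword (a # w'))"
proof -
  let ?T = "{map y js | js. set js \<subseteq> J \<and> length js = Suc (length w')}"
  have "V.subspace {a. red ?T (fword (a # w'))}"
  proof (rule V.subspaceI)
    show "0 \<in> {a. red ?T (fword (a # w'))}"
      using red_eqv[OF _ red_zero] rel_zero[of "[]" w'] by simp
  next
    fix a b assume "a \<in> {a. red ?T (fword (a # w'))}" "b \<in> {a. red ?T (fword (a # w'))}"
    then show "a + b \<in> {a. red ?T (fword (a # w'))}"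
      using red_eqv[OF _ red_add] rel_add[of "[]" a b w'] by simp
  next
    fix c a assume "a \<in> {a. red ?T (fword (a # w'))}"
    then show "smul c a \<in> {a. red ?T (fword (a # w'))}"
      using red_eqv[OF _ red_scale] rel_smul[of "[]" c a w'] by simp
  qed
  then show ?thesis
  proof (rule V.span_induct[OF a, where P="\<lambda>a. red ?T (fword (a # w'))"])
    fix b assume "b \<in> y ` J"
    then obtain j where j: "j \<in> J" "b = y j" by blast
    have "red ?T (fmul (fword [y j]) (fword w'))"
    proof (rule red_lmul[OF IH])
      fix v assume "v \<in> {map y js | js. set js \<subseteq> J \<and> length js = length w'}"
      then obtain js where "v = map y js" "set js \<subseteq> J" "length js = length w'" by blast
      then show "[y j] @ v \<in> ?T" using j by (intro CollectI exI[of _ "j # js"]) auto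
    qed
    then show "red ?T (fword (b # w'))" using j by (simp add: fword_mult)
  qed
qed

lemma expand_word: "set w \<subseteq> SY \<Longrightarrow> red {map y js | js. set js \<subseteq> J \<and> length js = length w} (fword w)"
proof (induction w)
  case Nil
  show ?case by (rule red_word) (auto intro: exI[of _ "[]"])
next
  case (Cons a w')
  then show ?case using expand_letter[of a w'] by simp
qed

definition Tb :: "'j \<Rightarrow> nat \<Rightarrow> 'g list set" where
  "Tb b k = {map y js | js. sorted js \<and> set js \<subseteq> J \<and> length js = k \<and> (\<forall>t\<in>set js. b \<le> t)}"

definition YW :: "nat \<Rightarrow> 'g list set" where
  "YW k = {v. set v \<subseteq> SY \<and> length v \<le> k}"

lemma insertion:
  assumes "j \<in> J" "sorted ts" "set ts \<subseteq> J" "b \<le> j" "\<forall>t\<in>set ts. b \<le> t"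
  shows "red (Tb b (Suc (length ts)) \<union> YW (length ts)) (fword (y j # map y ts))"
  using assms(2-5)
proof (induction ts arbitrary: b)
  case Nil
  show ?case using assms(1) Nil by (intro red_word) (auto simp: Tb_def intro!: exI[of _ "[j]"])
next
  case (Cons i ts')
  have i: "i \<in> J" "b \<le> i" "\<forall>t\<in>set ts'. i \<le> t" "sorted ts'" "set ts' \<subseteq> J"
    using Cons.prems by auto
  let ?T = "Tb b (Suc (length (i # ts'))) \<union> YW (length (i # ts'))"
  show ?case
  proof (cases "j \<le> i")
    case True
    have "y j # map y (i # ts') \<in> Tb b (Suc (length (i # ts')))"
      unfolding Tb_def using True Cons.prems assms(1)
      by (intro CollectI exI[of _ "j # i # ts'"]) (auto intro: order_trans)
    then show ?thesis by (intro red_word) simp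
  next
    case False
    then have ij: "i \<le> j" by simp
    have e: "eqv (fword (y j # y i # map y ts')) (\<lambda>w. fword (y i # y j # map y ts') w + fword (br (y j) (y i) # map y ts') w)"
      using rel_br[of "[]" "y j" "y i" "map y ts'"] by simp
    have "br (y j) (y i) \<in> G" using G_br y_SY SY_sub_G assms(1) i(1) by blast
    then obtain u p where up: "u \<in> SY" "p \<in> P" "br (y j) (y i) = u + p" using y_sum by blast
    have tsY: "set (map y ts') \<subseteq> SY" using map_y_SY[OF i(5)] .
    have r2: "red ?T (fword (br (y j) (y i) # map y ts'))"
    proof -
      have e2: "eqv (fword (br (y j) (y i) # map y ts')) (\<lambda>w. fword (u # map y ts') w + phi p * fword (map y ts') w)"
        unfolding up(3) using eqv_trans[OF rel_add[of "[]" u p "map y ts'"] eqv_add[OF eqv_refl wh_ctx[OF WhY[OF tsY] up(2), of "[]"]]]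
        by simp
      have "u # map y ts' \<in> ?T" using up(1) tsY by (auto simp: YW_def)
      moreover have "map y ts' \<in> ?T" using tsY by (auto simp: YW_def)
      ultimately show ?thesis by (intro red_eqv[OF e2] red_add red_scale red_word)
    qed
    have "red (Tb i (Suc (length ts')) \<union> YW (length ts')) (fword (y j # map y ts'))"
      using Cons.IH[of i] ij i by blast
    then have "red ?T (fmul (fword [y i]) (fword (y j # map y ts')))"
    proof (rule red_lmul)
      fix v assume "v \<in> Tb i (Suc (length ts')) \<union> YW (length ts')"
      then show "[y i] @ v \<in> ?T"
      proof
        assume "v \<in> Tb i (Suc (length ts'))"
        then obtain js where js: "v = map y js" "sorted js" "set js \<subseteq> J" "length js = Suc (length ts')" "\<forall>t\<in>set js. i \<le> t"
          unfolding Tb_def by blast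
        have "[y i] @ v \<in> Tb b (Suc (length (i # ts')))"
          unfolding Tb_def using js i by (intro CollectI exI[of _ "i # js"]) (auto intro: order_trans)
        then show ?thesis by simp
      next
        assume "v \<in> YW (length ts')"
        then show ?thesis using y_SY[OF i(1)] by (auto simp: YW_def)
      qed
    qed
    then have r1: "red ?T (fword (y i # y j # map y ts'))" by (simp add: fword_mult)
    show ?thesis using red_eqv[OF e red_add[OF r1 r2]] by simp
  qed
qed

definition OMW :: "nat \<Rightarrow> 'g list set" where
  "OMW n = {map y js | js. sorted js \<and> set js \<subseteq> J \<and> length js \<le> n}"

lemma OMW_mono: "m \<le> n \<Longrightarrow> OMW m \<subseteq> OMW n"
  unfolding OMW_def by force

lemma insertion':
  assumes "j \<in> J" "sorted ts" "set ts \<subseteq> J" "length ts \<le> n"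
    and IH: "\<And>v. set v \<subseteq> SY \<Longrightarrow> length v \<le> n \<Longrightarrow> red (OMW n) (fword v)"
  shows "red (OMW (Suc n)) (fword (y j # map y ts))"
proof -
  define b where "b = (case ts of [] \<Rightarrow> j | t # _ \<Rightarrow> min j t)"
  have b: "b \<le> j" "\<forall>t\<in>set ts. b \<le> t"
    using assms(2) by (auto simp: b_def split: list.splits intro: min.coboundedI2 order_trans)
  have "red (Tb b (Suc (length ts)) \<union> YW (length ts)) (fword (y j # map y ts))"
    by (rule insertion[OF assms(1-3) b])
  then show ?thesis
  proof (rule red_trans)
    fix u assume "u \<in> Tb b (Suc (length ts)) \<union> YW (length ts)"
    then show "red (OMW (Suc n)) (fword u)"
    proof
      assume "u \<in> Tb b (Suc (length ts))"
      then have "u \<in> OMW (Suc n)" using assms(4) unfolding Tb_def OMW_def by auto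
      then show ?thesis by (rule red_word)
    next
      assume "u \<in> YW (length ts)"
      then have "red (OMW n) (fword u)" using IH assms(4) by (auto simp: YW_def)
      then show ?thesis by (rule red_mono) (rule OMW_mono, simp)
    qed
  qed
qed

lemma sort_all: "set v \<subseteq> SY \<Longrightarrow> length v \<le> n \<Longrightarrow> red (OMW n) (fword v)"
proof (induction n arbitrary: v)
  case 0
  then show ?case by (intro red_word) (auto simp: OMW_def intro!: exI[of _ "[]"])
next
  case (Suc n)
  have IH: "\<And>v. set v \<subseteq> SY \<Longrightarrow> length v \<le> n \<Longrightarrow> red (OMW n) (fword v)" by (rule Suc.IH)
  show ?case
  proof (cases "length v \<le> n")
    case True
    then have "red (OMW n) (fword v)" using IH[OF Suc.prems(1)] by simp
    then show ?thesis by (rule red_mono) (rule OMW_mono, simp)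
  next
    case False
    have "red {map y js | js. set js \<subseteq> J \<and> length js = length v} (fword v)"
      by (rule expand_word[OF Suc.prems(1)])
    then show ?thesis
    proof (rule red_trans)
      fix u assume "u \<in> {map y js | js. set js \<subseteq> J \<and> length js = length v}"
      then obtain js where js: "u = map y js" "set js \<subseteq> J" "length js = length v" by blast
      then obtain j js' where jj: "js = j # js'" using False Suc.prems(2) by (cases js) auto
      have j: "j \<in> J" "set js' \<subseteq> J" "length js' \<le> n" using js jj Suc.prems(2) by auto
      have "red (OMW n) (fword (map y js'))" using IH[OF map_y_SY[OF j(2)]] j by simp
      then have "red {[y j] @ z | z. z \<in> OMW n} (fmul (fword [y j]) (fword (map y js')))"
        by (rule red_lmul) blast
      then have "red (OMW (Suc n)) (fmul (fword [y j]) (fword (map y js')))"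
      proof (rule red_trans)
        fix z assume "z \<in> {[y j] @ z | z. z \<in> OMW n}"
        then obtain ts where ts: "z = y j # map y ts" "sorted ts" "set ts \<subseteq> J" "length ts \<le> n"
          unfolding OMW_def by auto
        show "red (OMW (Suc n)) (fword z)" unfolding ts(1) by (rule insertion'[OF j(1) ts(2-4) IH])
      qed
      then show "red (OMW (Suc n)) (fword u)" using js jj by (simp add: fword_mult)
    qed
  qed
qed

end


context WH begin
lemma Ep_sum: "Ep p (\<lambda>w. \<Sum>i\<in>I. g i w) = (\<lambda>w. \<Sum>i\<in>I. Ep p (g i) w)"
  by (simp add: Ep_def fmul_sum_right sum_distrib_left sum_subtractf)
end

context WHY begin

definition OA :: "'g list set" where
  "OA = {map y js | js. sorted js \<and> set js \<subseteq> J}"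

lemma fspan_OA_sub:
  assumes h: "h \<in> fspan OA"
  shows "h \<in> ordered_monomial_span y J"
proof -
  define S where "S = {js. sorted js \<and> set js \<subseteq> J \<and> h (map y js) \<noteq> 0}"
  have inj: "inj_on (map y) {js. set js \<subseteq> J}"
    by (rule inj_on_mapI) (rule inj_on_subset[OF y_inj], auto)
  have fS: "finite S"
  proof (rule finite_subset)
    show "S \<subseteq> map y -` {w. h w \<noteq> 0} \<inter> {js. set js \<subseteq> J}" unfolding S_def by auto
    show "finite (map y -` {w. h w \<noteq> 0} \<inter> {js. set js \<subseteq> J})"
      using h inj by (intro finite_vimage_IntI) (auto simp: fspan_def fin_supp_def)
  qed
  have eq: "h w = (\<Sum>js\<in>S. h (map y js) * fword (map y js) w)" for w
  proof (cases "h w = 0")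
    case True
    have "(\<Sum>js\<in>S. h (map y js) * fword (map y js) w) = (\<Sum>js\<in>S. 0)"
      by (rule sum.cong) (use True in \<open>auto simp: fword_def\<close>)
    then show ?thesis using True by simp
  next
    case False
    then have "w \<in> OA" using h by (auto simp: fspan_def)
    then obtain js0 where js0: "w = map y js0" "sorted js0" "set js0 \<subseteq> J" unfolding OA_def by blast
    have js0S: "js0 \<in> S" using js0 False by (simp add: S_def)
    have "(\<Sum>js\<in>S. h (map y js) * fword (map y js) w) = (\<Sum>js\<in>S. if js = js0 then h w else 0)"
    proof (rule sum.cong)
      fix js assume "js \<in> S"
      then have "set js \<subseteq> J" by (simp add: S_def)
      then have "map y js = map y js0 \<longleftrightarrow> js = js0" using inj js0(3) by (auto dest: inj_onD)
      then show "h (map y js) * fword (map y js) w = (if js = js0 then h w else 0)"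
        using js0(1) by (auto simp: fword_def)
    qed simp
    also have "\<dots> = h w" using fS js0S by (simp add: sum.delta')
    finally show ?thesis by simp
  qed
  show ?thesis unfolding ordered_monomial_span_def
    by (intro CollectI exI[of _ S] exI[of _ "\<lambda>js. h (map y js)"] conjI fS ext eq) (auto simp: S_def)
qed

theorem main:
  assumes f: "fin_supp f"
  shows "quasi_whittaker_rep smul br P phi f \<longleftrightarrow> (\<exists>q \<in> ordered_monomial_span y J. (\<lambda>w. f w - q w) \<in> W)"
proof
  assume qw: "quasi_whittaker_rep smul br P phi f"
  then have wh: "\<forall>p\<in>P. Ep p f \<in> W" by (simp add: quasi_whittaker_rep_def Ep_def)
  obtain n where "red (NFS n) f" using normalize_fin[OF f] by blast
  then have "red (NFS 0) f" by (rule whittaker_NF0[OF wh])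
  then have "red OA f"
  proof (rule red_trans)
    fix u assume "u \<in> NFS 0"
    then have uY: "set u \<subseteq> SY" unfolding NFS_def by auto
    have "red (OMW (length u)) (fword u)" by (rule sort_all[OF uY order_refl])
    then show "red OA (fword u)" by (rule red_mono) (auto simp: OMW_def OA_def)
  qed
  then obtain q where "q \<in> fspan OA" "eqv f q" unfolding red_def by blast
  then show "\<exists>q \<in> ordered_monomial_span y J. (\<lambda>w. f w - q w) \<in> W"
    using fspan_OA_sub eqv_def by blast
next
  assume "\<exists>q \<in> ordered_monomial_span y J. (\<lambda>w. f w - q w) \<in> W"
  then obtain q S c where q: "finite S" "\<forall>js\<in>S. sorted js \<and> set js \<subseteq> J"
      "q = (\<lambda>w. \<Sum>js\<in>S. c js * fword (map y js) w)" and fq: "(\<lambda>w. f w - q w) \<in> W"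
    unfolding ordered_monomial_span_def by blast
  show "quasi_whittaker_rep smul br P phi f"
    unfolding quasi_whittaker_rep_def
  proof
    fix p assume p: "p \<in> P"
    have "Ep p q \<in> W"
      unfolding q(3) Ep_sum Ep_scale
    proof (rule W_sum, rule W_scale)
      fix js assume "js \<in> S"
      then have "whv (map y js)" using q(2) map_y_SY WhY by blast
      then show "Ep p (fword (map y js)) \<in> W" using p unfolding whv_def eqv_def Ep_word by blast
    qed
    moreover have "Ep p (\<lambda>w. f w - q w) \<in> W" unfolding Ep_def
      by (rule W_diff[OF W_lmul[OF fq fin_supp_fgen] W_scale[OF fq]])
    ultimately have "(\<lambda>w. Ep p q w + Ep p (\<lambda>w. f w - q w) w) \<in> W" by (rule W_add)
    then show "(\<lambda>w. fmul (fgen p) f w - phi p * f w) \<in> W"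
      by (rule W_ext) (simp add: Ep_def fmul_diff_right algebra_simps)
  qed
qed

end

theorem theorem3p1:
  fixes smul :: "complex \<Rightarrow> 'g::ab_group_add \<Rightarrow> 'g"
    and br :: "'g \<Rightarrow> 'g \<Rightarrow> 'g"
    and P :: "'g set"
    and phi :: "'g \<Rightarrow> complex"
    and y :: "'j::linorder \<Rightarrow> 'g"
    and J :: "'j set"
  assumes lie: "lie_algebra smul br"
    and nonss: "\<not> semisimple smul br"
    and ideal: "lie_ideal smul br P"
    and nonperf: "\<not> perfect smul br P"
    and hom: "lie_hom_to_C smul br P phi"
    and y_inj: "inj_on y J"
    and y_indep: "module.independent smul (y ` J)"
    and y_sub: "module.span smul (y ` J) \<subseteq> whittaker_annihilator br P phi"
    and y_cap: "module.span smul (y ` J) \<inter> P = {0}"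
    and y_sum: "\<forall>g \<in> whittaker_annihilator br P phi.
                  \<exists>u \<in> module.span smul (y ` J). \<exists>p \<in> P. g = u + p"
  shows "\<forall>f. fin_supp f \<longrightarrow>
           (quasi_whittaker_rep smul br P phi f \<longleftrightarrow>
            (\<exists>q \<in> ordered_monomial_span y J. (\<lambda>w. f w - q w) \<in> W_ideal smul br P phi))"
proof -
  interpret WHY smul br P phi y J
    unfolding WHY_def WH_def WHY_axioms_def using lie ideal hom y_inj y_indep y_sub y_cap y_sum by blast
  show ?thesis using main by blast
qed


end
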